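(* Let $G$ be a finite non-abelian group which is exponent-critical. Then the order of $G$ is divisible by at most three distinct primes.
   Context: A finite group $G$ is called exponent-critical if the exponent $\exp(G)$ of $G$ is not equal to the least common multiple of the exponents of the proper non-abelian subgroups of $G$ (the least common multiple of an empty collection being $1$). *)

theory Defs
  imports "HOL-Algebra.Algebra"
begin

(* exponent of a subset (subgroup) H of group G: lcm of the orders of its elements;
   the order of an element of a subgroup is the same computed in G or in H *)
definition set_exponent :: "('a, 'b) monoid_scheme \<Rightarrow> 'a set \<Rightarrow> nat" where
  "set_exponent G H = Lcm ((group.ord G) ` H)"

definition group_exponent :: "('a, 'b) monoid_scheme \<Rightarrow> nat" where
  "group_exponent G = set_exponent G (carrier G)"

definition nonabelian_set :: "('a, 'b) monoid_scheme \<Rightarrow> 'a set \<Rightarrow> bool" where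
  "nonabelian_set G H \<longleftrightarrow> (\<exists>x\<in>H. \<exists>y\<in>H. x \<otimes>\<^bsub>G\<^esub> y \<noteq> y \<otimes>\<^bsub>G\<^esub> x)"

definition exponent_critical :: "('a, 'b) monoid_scheme \<Rightarrow> bool" where
  "exponent_critical G \<longleftrightarrow>
     group_exponent G \<noteq>
     Lcm {set_exponent G H | H. subgroup H G \<and> H \<noteq> carrier G \<and> nonabelian_set G H}"

end

theory Submission
  imports Defs
begin


definition conjset :: "('a,'b) monoid_scheme \<Rightarrow> 'a \<Rightarrow> 'a set \<Rightarrow> 'a set" where
  "conjset G g A = (\<lambda>a. g \<otimes>\<^bsub>G\<^esub> a \<otimes>\<^bsub>G\<^esub> inv\<^bsub>G\<^esub> g) ` A"

definition nrm :: "('a,'b) monoid_scheme \<Rightarrow> 'a set \<Rightarrow> 'a set" where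
  "nrm G A = {g \<in> carrier G. conjset G g A = A}"

definition cent :: "('a,'b) monoid_scheme \<Rightarrow> 'a set \<Rightarrow> 'a set" where
  "cent G A = {g \<in> carrier G. \<forall>a\<in>A. g \<otimes>\<^bsub>G\<^esub> a = a \<otimes>\<^bsub>G\<^esub> g}"

definition abel :: "('a,'b) monoid_scheme \<Rightarrow> 'a set \<Rightarrow> bool" where
  "abel G A \<longleftrightarrow> (\<forall>a\<in>A. \<forall>b\<in>A. a \<otimes>\<^bsub>G\<^esub> b = b \<otimes>\<^bsub>G\<^esub> a)"

context group
begin

lemma cancel_l1 [simp]: "g \<in> carrier G \<Longrightarrow> x \<in> carrier G \<Longrightarrow> inv g \<otimes> (g \<otimes> x) = x"
  by (simp flip: m_assoc)
lemma cancel_l2 [simp]: "g \<in> carrier G \<Longrightarrow> x \<in> carrier G \<Longrightarrow> g \<otimes> (inv g \<otimes> x) = x"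
  by (simp flip: m_assoc)

lemma conj_eq_iff:
  assumes "g \<in> carrier G" "x \<in> carrier G" "y \<in> carrier G"
  shows "g \<otimes> x \<otimes> inv g = g \<otimes> y \<otimes> inv g \<longleftrightarrow> x = y"
  using assms by (metis inv_closed m_closed right_cancel l_cancel)

lemma conjset_sub: "A \<subseteq> carrier G \<Longrightarrow> g \<in> carrier G \<Longrightarrow> conjset G g A \<subseteq> carrier G"
  unfolding conjset_def by auto

lemma conjset_subgroup:
  assumes "subgroup H G" "g \<in> carrier G"
  shows "subgroup (conjset G g H) G"
proof -
  interpret H: subgroup H G by fact
  show ?thesis
  proof
    show "conjset G g H \<subseteq> carrier G" using conjset_sub assms H.subset by blast
    show "\<one> \<in> conjset G g H" unfolding conjset_def
      by (rule image_eqI[of _ _ \<one>]) (use assms in auto)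
  next
    fix a b assume "a \<in> conjset G g H" "b \<in> conjset G g H"
    then obtain a' b' where ab: "a' \<in> H" "b' \<in> H" "a = g \<otimes> a' \<otimes> inv g" "b = g \<otimes> b' \<otimes> inv g"
      unfolding conjset_def by auto
    have "a \<otimes> b = g \<otimes> (a' \<otimes> b') \<otimes> inv g" using ab assms(2) H.mem_carrier[OF ab(1)] H.mem_carrier[OF ab(2)]
      by (simp add: m_assoc)
    then show "a \<otimes> b \<in> conjset G g H" unfolding conjset_def using ab by auto
  next
    fix a assume "a \<in> conjset G g H"
    then obtain a' where ab: "a' \<in> H" "a = g \<otimes> a' \<otimes> inv g"
      unfolding conjset_def by auto
    have "inv a = g \<otimes> inv a' \<otimes> inv g" using ab assms(2)
      by (simp add: inv_mult_group m_assoc H.mem_carrier)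
    then show "inv a \<in> conjset G g H" unfolding conjset_def using ab by auto
  qed
qed

lemma conj_inj: "g \<in> carrier G \<Longrightarrow> A \<subseteq> carrier G \<Longrightarrow> inj_on (\<lambda>a. g \<otimes> a \<otimes> inv g) A"
  by (auto simp: inj_on_def conj_eq_iff subset_iff)

lemma card_conjset: "g \<in> carrier G \<Longrightarrow> A \<subseteq> carrier G \<Longrightarrow> card (conjset G g A) = card A"
  unfolding conjset_def by (rule card_image) (rule conj_inj)

lemma conjset_mult:
  assumes "g \<in> carrier G" "h \<in> carrier G" "A \<subseteq> carrier G"
  shows "conjset G (g \<otimes> h) A = conjset G g (conjset G h A)"
  unfolding conjset_def image_image using assms
  by (intro image_cong refl) (auto simp: inv_mult_group m_assoc subset_iff)

lemma conjset_one: "A \<subseteq> carrier G \<Longrightarrow> conjset G \<one> A = A"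
  unfolding conjset_def by (auto simp: subset_iff image_iff)

lemma conjset_inv_cancel:
  assumes "g \<in> carrier G" "A \<subseteq> carrier G"
  shows "conjset G (inv g) (conjset G g A) = A"
  using conjset_mult[of "inv g" g A] assms by (simp add: conjset_one)

lemma conjset_mem: "a \<in> A \<Longrightarrow> g \<otimes> a \<otimes> inv g \<in> conjset G g A"
  unfolding conjset_def by auto

lemma conjset_mono: "A \<subseteq> B \<Longrightarrow> conjset G g A \<subseteq> conjset G g B"
  unfolding conjset_def by auto

lemma nrm_iff_sub:
  assumes fin: "finite (carrier G)" and "A \<subseteq> carrier G" "g \<in> carrier G"
  shows "g \<in> nrm G A \<longleftrightarrow> conjset G g A \<subseteq> A"
proof
  assume "conjset G g A \<subseteq> A"
  moreover have "finite A" using assms finite_subset by blast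
  ultimately have "conjset G g A = A" using card_conjset[OF assms(3,2)]
    by (simp add: card_subset_eq)
  then show "g \<in> nrm G A" using assms unfolding nrm_def by auto
qed (auto simp: nrm_def)

lemma nrm_subgroup:
  assumes fin: "finite (carrier G)" and A: "A \<subseteq> carrier G"
  shows "subgroup (nrm G A) G"
proof
  show "nrm G A \<subseteq> carrier G" unfolding nrm_def by auto
  show "\<one> \<in> nrm G A" unfolding nrm_def using conjset_one[OF A] by auto
next
  fix g h assume "g \<in> nrm G A" "h \<in> nrm G A"
  then show "g \<otimes> h \<in> nrm G A" unfolding nrm_def using conjset_mult[OF _ _ A] by auto
next
  fix g assume g: "g \<in> nrm G A"
  then have "conjset G (inv g) A = A"
    using conjset_inv_cancel[OF _ A, of g] unfolding nrm_def by auto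
  then show "inv g \<in> nrm G A" using g unfolding nrm_def by auto
qed

lemma cent_subgroup:
  assumes A: "A \<subseteq> carrier G"
  shows "subgroup (cent G A) G"
proof
  show "cent G A \<subseteq> carrier G" unfolding cent_def by auto
  show "\<one> \<in> cent G A" unfolding cent_def using A by auto
next
  fix g h assume gh: "g \<in> cent G A" "h \<in> cent G A"
  show "g \<otimes> h \<in> cent G A" unfolding cent_def
  proof (intro CollectI conjI ballI)
    show "g \<otimes> h \<in> carrier G" using gh unfolding cent_def by auto
    fix a assume a: "a \<in> A"
    have c: "g \<in> carrier G" "h \<in> carrier G" "a \<in> carrier G" using gh a A unfolding cent_def by auto
    have "g \<otimes> h \<otimes> a = g \<otimes> (h \<otimes> a)" using c by (simp add: m_assoc)
    also have "\<dots> = g \<otimes> (a \<otimes> h)" using gh a unfolding cent_def by auto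
    also have "\<dots> = (g \<otimes> a) \<otimes> h" using c by (simp add: m_assoc)
    also have "\<dots> = (a \<otimes> g) \<otimes> h" using gh a unfolding cent_def by auto
    finally show "g \<otimes> h \<otimes> a = a \<otimes> (g \<otimes> h)" using c by (simp add: m_assoc)
  qed
next
  fix g assume g: "g \<in> cent G A"
  show "inv g \<in> cent G A" unfolding cent_def
  proof (intro CollectI conjI ballI)
    show "inv g \<in> carrier G" using g unfolding cent_def by auto
    fix a assume a: "a \<in> A"
    have c: "g \<in> carrier G" "a \<in> carrier G" using g a A unfolding cent_def by auto
    have e: "g \<otimes> a = a \<otimes> g" using g a unfolding cent_def by auto
    have "inv g \<otimes> a = inv g \<otimes> a \<otimes> g \<otimes> inv g" using c by (simp add: m_assoc)
    also have "\<dots> = inv g \<otimes> (g \<otimes> a) \<otimes> inv g" using c e by (simp add: m_assoc)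
    also have "\<dots> = a \<otimes> inv g" using c by (simp add: m_assoc flip: m_assoc)
    finally show "inv g \<otimes> a = a \<otimes> inv g" .
  qed
qed

end



context group
begin

lemma prod_formula:
  assumes fin: "finite (carrier G)" and H: "subgroup H G" and K: "subgroup K G"
  shows "card (H <#> K) * card (H \<inter> K) = card H * card K"
proof -
  interpret H: subgroup H G by fact
  interpret K: subgroup K G by fact
  define fib where "fib y = {z \<in> H \<times> K. fst z \<otimes> snd z = y}" for y
  have finH: "finite H" and finK: "finite K"
    using fin H.subset K.subset finite_subset by blast+
  have HK: "H <#> K = {h \<otimes> k | h k. h \<in> H \<and> k \<in> K}"
    unfolding set_mult_def by blast
  have finHK: "finite (H <#> K)"
    using fin set_mult_closed[OF H.subset K.subset] finite_subset by blast
  have union: "H \<times> K = (\<Union>y\<in>H <#> K. fib y)"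
    unfolding fib_def HK by fastforce
  have card_fib: "card (fib y) = card (H \<inter> K)" if y: "y \<in> H <#> K" for y
  proof -
    obtain h0 k0 where hk0: "h0 \<in> H" "k0 \<in> K" "y = h0 \<otimes> k0" using y HK by auto
    have c0: "h0 \<in> carrier G" "k0 \<in> carrier G" using hk0 H.mem_carrier K.mem_carrier by auto
    have "bij_betw (\<lambda>d. (h0 \<otimes> d, inv d \<otimes> k0)) (H \<inter> K) (fib y)"
    proof (rule bij_betwI')
      fix d e assume "d \<in> H \<inter> K" "e \<in> H \<inter> K"
      then show "((h0 \<otimes> d, inv d \<otimes> k0) = (h0 \<otimes> e, inv e \<otimes> k0)) = (d = e)"
        using c0 H.mem_carrier by auto
    next
      fix d assume d: "d \<in> H \<inter> K"
      have dc: "d \<in> carrier G" using d H.mem_carrier by auto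
      have "h0 \<otimes> d \<otimes> (inv d \<otimes> k0) = h0 \<otimes> k0" using dc c0 by (simp add: m_assoc)
      then show "(h0 \<otimes> d, inv d \<otimes> k0) \<in> fib y"
        unfolding fib_def using d hk0 by (auto intro: H.m_closed K.m_closed K.m_inv_closed)
    next
      fix z assume z: "z \<in> fib y"
      obtain h k where hk: "z = (h, k)" "h \<in> H" "k \<in> K" "h \<otimes> k = h0 \<otimes> k0"
        using z hk0 unfolding fib_def by auto
      have c: "h \<in> carrier G" "k \<in> carrier G" using hk H.mem_carrier K.mem_carrier by auto
      define d where "d = inv h0 \<otimes> h"
      have dH: "d \<in> H" unfolding d_def using hk hk0 by (auto intro: H.m_closed H.m_inv_closed)
      have d2: "d = k0 \<otimes> inv k"
      proof -
        have "inv h0 \<otimes> (h \<otimes> k) \<otimes> inv k = inv h0 \<otimes> (h0 \<otimes> k0) \<otimes> inv k" using hk by simp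
        then show ?thesis unfolding d_def using c c0 by (simp add: m_assoc)
      qed
      have dK: "d \<in> K" unfolding d2 using hk hk0 by (auto intro: K.m_closed K.m_inv_closed)
      have "h0 \<otimes> d = h" unfolding d_def using c c0 by simp
      moreover have "inv d \<otimes> k0 = k" unfolding d2 using c c0 by (simp add: inv_mult_group m_assoc)
      ultimately show "\<exists>d\<in>H \<inter> K. z = (h0 \<otimes> d, inv d \<otimes> k0)" using dH dK hk by auto
    qed
    then show ?thesis by (simp add: bij_betw_same_card)
  qed
  have "card (H \<times> K) = (\<Sum>y\<in>H <#> K. card (fib y))"
    unfolding union
  proof (rule card_UN_disjoint[OF finHK])
    show "\<forall>i\<in>H <#> K. finite (fib i)" unfolding fib_def using finH finK
      by (auto intro: finite_subset[of _ "H \<times> K"])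
    show "\<forall>i\<in>H <#> K. \<forall>j\<in>H <#> K. i \<noteq> j \<longrightarrow> fib i \<inter> fib j = {}"
      unfolding fib_def by auto
  qed
  also have "\<dots> = card (H <#> K) * card (H \<inter> K)" using card_fib by simp
  finally show ?thesis by (simp add: card_cartesian_product)
qed

lemma prod_card_dvd:
  assumes fin: "finite (carrier G)" and H: "subgroup H G" and K: "subgroup K G"
  shows "card (H <#> K) dvd card H * card K"
  using prod_formula[OF assms] by (metis dvd_triv_left)

lemma setmult_subgroup:
  assumes H: "subgroup H G" and K: "subgroup K G"
    and nk: "\<And>k. k \<in> K \<Longrightarrow> conjset G k H \<subseteq> H"
  shows "subgroup (H <#> K) G"
proof -
  interpret H: subgroup H G by fact
  interpret K: subgroup K G by fact
  have HK: "H <#> K = {h \<otimes> k | h k. h \<in> H \<and> k \<in> K}"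
    unfolding set_mult_def by blast
  have cj: "k \<otimes> h \<otimes> inv k \<in> H" if "k \<in> K" "h \<in> H" for k h
    using nk[OF that(1)] conjset_mem[OF that(2)] by blast
  show ?thesis
  proof
    show "H <#> K \<subseteq> carrier G" using set_mult_closed[OF H.subset K.subset] .
    show "\<one> \<in> H <#> K" unfolding HK by (rule CollectI, rule exI[of _ \<one>], rule exI[of _ \<one>]) auto
  next
    fix a b assume "a \<in> H <#> K" "b \<in> H <#> K"
    then obtain h1 k1 h2 k2 where hk: "h1 \<in> H" "k1 \<in> K" "h2 \<in> H" "k2 \<in> K"
      "a = h1 \<otimes> k1" "b = h2 \<otimes> k2" unfolding HK by auto
    have c: "h1 \<in> carrier G" "k1 \<in> carrier G" "h2 \<in> carrier G" "k2 \<in> carrier G"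
      using hk H.mem_carrier K.mem_carrier by auto
    have "a \<otimes> b = (h1 \<otimes> (k1 \<otimes> h2 \<otimes> inv k1)) \<otimes> (k1 \<otimes> k2)"
      using c hk by (simp add: m_assoc)
    moreover have "h1 \<otimes> (k1 \<otimes> h2 \<otimes> inv k1) \<in> H" using cj hk by (auto intro: H.m_closed)
    moreover have "k1 \<otimes> k2 \<in> K" using hk by (auto intro: K.m_closed)
    ultimately show "a \<otimes> b \<in> H <#> K" unfolding HK by blast
  next
    fix a assume "a \<in> H <#> K"
    then obtain h k where hk: "h \<in> H" "k \<in> K" "a = h \<otimes> k" unfolding HK by auto
    have c: "h \<in> carrier G" "k \<in> carrier G" using hk H.mem_carrier K.mem_carrier by auto
    have "inv a = (inv k \<otimes> inv h \<otimes> inv (inv k)) \<otimes> inv k"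
      using c hk by (simp add: m_assoc inv_mult_group)
    moreover have "inv k \<otimes> inv h \<otimes> inv (inv k) \<in> H" using cj[of "inv k" "inv h"] hk by (auto intro: H.m_inv_closed K.m_inv_closed)
    moreover have "inv k \<in> K" using hk by (auto intro: K.m_inv_closed)
    ultimately show "inv a \<in> H <#> K" unfolding HK by blast
  qed
qed

lemma setmult_sup1: "subgroup H G \<Longrightarrow> subgroup K G \<Longrightarrow> H \<subseteq> H <#> K"
  unfolding set_mult_def by (force intro: subgroup.one_closed dest: subgroup.mem_carrier)

lemma setmult_sup2: "subgroup H G \<Longrightarrow> subgroup K G \<Longrightarrow> K \<subseteq> H <#> K"
  unfolding set_mult_def by (force intro: subgroup.one_closed dest: subgroup.mem_carrier)

end



lemma pgroup_fixed_point:
  fixes G :: "('a, 'b) monoid_scheme" and act :: "'a \<Rightarrow> 'c \<Rightarrow> 'c"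
  assumes grp: "group G" and p: "Factorial_Ring.prime (p::nat)" and ord: "order G = p ^ j"
    and finE: "finite E" and ndvd: "\<not> p dvd card E"
    and closed: "\<And>g x. g \<in> carrier G \<Longrightarrow> x \<in> E \<Longrightarrow> act g x \<in> E"
    and one: "\<And>x. x \<in> E \<Longrightarrow> act \<one>\<^bsub>G\<^esub> x = x"
    and comp: "\<And>g h x. g \<in> carrier G \<Longrightarrow> h \<in> carrier G \<Longrightarrow> x \<in> E \<Longrightarrow> act (g \<otimes>\<^bsub>G\<^esub> h) x = act g (act h x)"
  shows "\<exists>z\<in>E. \<forall>g\<in>carrier G. act g z = z"
proof (rule ccontr)
  assume nofix: "\<not> (\<exists>z\<in>E. \<forall>g\<in>carrier G. act g z = z)"
  interpret G: group G by fact
  define \<phi> where "\<phi> g = (\<lambda>z\<in>E. act g z)" for g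
  have inv_act: "act (inv\<^bsub>G\<^esub> g) (act g z) = z" if "g \<in> carrier G" "z \<in> E" for g z
    using comp[of "inv\<^bsub>G\<^esub> g" g z] one that by simp
  have bij: "\<phi> g \<in> Bij E" if g: "g \<in> carrier G" for g
  proof -
    have "bij_betw (act g) E E"
    proof (rule bij_betwI[where g = "act (inv\<^bsub>G\<^esub> g)"])
      show "act g \<in> E \<rightarrow> E" using closed g by auto
      show "act (inv\<^bsub>G\<^esub> g) \<in> E \<rightarrow> E" using closed g by auto
      show "\<And>x. x \<in> E \<Longrightarrow> act (inv\<^bsub>G\<^esub> g) (act g x) = x" using inv_act g by auto
      show "\<And>y. y \<in> E \<Longrightarrow> act g (act (inv\<^bsub>G\<^esub> g) y) = y"
        using inv_act[of "inv\<^bsub>G\<^esub> g"] g by auto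
    qed
    then have "bij_betw (\<phi> g) E E" unfolding \<phi>_def
      by (rule bij_betw_cong[THEN iffD1, rotated]) auto
    then show ?thesis unfolding Bij_def \<phi>_def by auto
  qed
  have hom: "\<phi> \<in> hom G (BijGroup E)"
  proof (rule homI)
    show "\<phi> x \<in> carrier (BijGroup E)" if "x \<in> carrier G" for x
      using bij that by (simp add: BijGroup_def)
    fix x y assume xy: "x \<in> carrier G" "y \<in> carrier G"
    have "\<phi> (x \<otimes>\<^bsub>G\<^esub> y) = compose E (\<phi> x) (\<phi> y)"
      unfolding \<phi>_def compose_def using comp xy closed by (intro ext) auto
    then show "\<phi> (x \<otimes>\<^bsub>G\<^esub> y) = \<phi> x \<otimes>\<^bsub>BijGroup E\<^esub> \<phi> y"
      using bij xy by (simp add: BijGroup_def)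
  qed
  interpret A: group_action G E \<phi>
    unfolding group_action_def
    by (intro group_hom.intro grp group_BijGroup group_hom_axioms.intro hom)
  have orb_dvd: "p dvd card (orbit G \<phi> z)" if z: "z \<in> E" for z
  proof -
    have "card (orbit G \<phi> z) dvd p ^ j"
      using A.orbit_stabilizer_theorem[OF z] ord by (metis dvd_triv_left)
    then obtain i where i: "i \<le> j" "card (orbit G \<phi> z) = p ^ i"
      using p by (auto simp: divides_primepow_nat)
    have "z \<in> orbit G \<phi> z" using A.orbit_refl[OF z] .
    have "i \<noteq> 0"
    proof
      assume "i = 0"
      then have "card (orbit G \<phi> z) = 1" using i by simp
      then obtain Y where "orbit G \<phi> z = {Y}" using card_1_singletonE by blast
      then have o: "orbit G \<phi> z = {z}" using \<open>z \<in> orbit G \<phi> z\<close> by auto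
      have "\<forall>g\<in>carrier G. act g z = z"
      proof
        fix g assume g: "g \<in> carrier G"
        have "\<phi> g z \<in> orbit G \<phi> z" unfolding orbit_def using g by auto
        then show "act g z = z" using o z unfolding \<phi>_def by auto
      qed
      then show False using nofix z by auto
    qed
    then show ?thesis using i by (simp add: dvd_power)
  qed
  have "(\<Sum>orb\<in>orbits G E \<phi>. \<Sum>x\<in>orb. (1::nat)) = (\<Sum>x\<in>E. 1)"
    using A.disjoint_sum[OF finE] .
  then have "card E = (\<Sum>orb\<in>orbits G E \<phi>. card orb)" by simp
  moreover have "p dvd (\<Sum>orb\<in>orbits G E \<phi>. card orb)"
    by (rule dvd_sum) (auto simp: orbits_def intro: orb_dvd)
  ultimately show False using ndvd by simp
qed



definition syl :: "('a,'b) monoid_scheme \<Rightarrow> nat \<Rightarrow> 'a set \<Rightarrow> bool" where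
  "syl G p P \<longleftrightarrow> subgroup P G \<and> card P = p ^ multiplicity p (order G)"

context group
begin

lemma subgroup_card_dvd:
  assumes "subgroup R G" "subgroup H G" "R \<subseteq> H"
  shows "card R dvd card H"
proof -
  interpret H: group "G\<lparr>carrier := H\<rparr>" using subgroup_imp_group assms(2) .
  have "subgroup R (G\<lparr>carrier := H\<rparr>)" using subgroup_incl assms by blast
  then have "card (rcosets\<^bsub>G\<lparr>carrier := H\<rparr>\<^esub> R) * card R = order (G\<lparr>carrier := H\<rparr>)"
    using H.lagrange by blast
  moreover have "order (G\<lparr>carrier := H\<rparr>) = card H" by (simp add: order_def)
  ultimately show ?thesis by (metis dvd_triv_right)
qed

lemma card_subgroup_dvd_order:
  assumes "subgroup H G"
  shows "card H dvd order G"
  using lagrange[OF assms] by (metis dvd_triv_right)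

lemma order_pos: "finite (carrier G) \<Longrightarrow> order G > 0"
  by (simp add: order_gt_0_iff_finite)

lemma syl_exists:
  assumes fin: "finite (carrier G)" and p: "Factorial_Ring.prime (p::nat)"
  shows "\<exists>P. syl G p P"
proof -
  define a where "a = multiplicity p (order G)"
  have "p ^ a dvd order G" unfolding a_def by (rule multiplicity_dvd)
  then obtain m where "order G = p ^ a * m" by blast
  from sylow_thm[OF p is_group this fin] show ?thesis unfolding syl_def a_def by blast
qed

lemma fill_subgroup:
  assumes fin: "finite (carrier G)" and H: "subgroup H G"
    and all: "\<And>r. Factorial_Ring.prime (r::nat) \<Longrightarrow> r dvd order G \<Longrightarrow>
                  \<exists>R. subgroup R G \<and> R \<subseteq> H \<and> card R = r ^ multiplicity r (order G)"
  shows "H = carrier G"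
proof -
  have pos: "order G > 0" using order_pos fin by blast
  have Hpos: "card H > 0"
    using subgroup.one_closed[OF H] fin subgroup.subset[OF H] finite_subset card_gt_0_iff by blast
  have "order G dvd card H"
  proof (rule multiplicity_le_imp_dvd)
    show "order G \<noteq> 0" using pos by simp
    fix r :: nat assume r: "Factorial_Ring.prime r"
    show "multiplicity r (order G) \<le> multiplicity r (card H)"
    proof (cases "r dvd order G")
      case True
      obtain R where R: "subgroup R G" "R \<subseteq> H" "card R = r ^ multiplicity r (order G)"
        using all[OF r True] by blast
      have "r ^ multiplicity r (order G) dvd card H"
        using subgroup_card_dvd[OF R(1) H R(2)] R(3) by simp
      moreover have "r \<noteq> Suc 0" using prime_gt_1_nat[OF r] by simp
      ultimately show ?thesis using power_dvd_iff_le_multiplicity[of "card H" r "multiplicity r (order G)"] Hpos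
        by simp
    next
      case False
      then show ?thesis by (simp add: not_dvd_imp_multiplicity_0)
    qed
  qed
  then have "order G \<le> card H" using Hpos by (simp add: dvd_imp_le)
  moreover have "finite (carrier G)" using fin .
  ultimately show ?thesis using subgroup.subset[OF H] unfolding order_def
    using card_seteq by blast
qed

lemma syl_index_ndvd:
  assumes fin: "finite (carrier G)" and p: "Factorial_Ring.prime (p::nat)" and P: "syl G p P"
  shows "\<not> p dvd card (rcosets P)"
proof
  assume "p dvd card (rcosets P)"
  then obtain c where c: "card (rcosets P) = p * c" by blast
  have "card (rcosets P) * card P = order G" using lagrange P unfolding syl_def by blast
  then have "order G = p ^ Suc (multiplicity p (order G)) * c" using P c unfolding syl_def
    by (simp add: mult_ac)
  then have "p ^ Suc (multiplicity p (order G)) dvd order G" by (metis dvd_triv_left)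
  moreover have "p \<noteq> Suc 0" using prime_gt_1_nat[OF p] by simp
  ultimately show False using power_dvd_iff_le_multiplicity[of "order G" p "Suc (multiplicity p (order G))"] order_pos[OF fin]
    by simp
qed

lemma sylow_conj_contains:
  assumes fin: "finite (carrier G)" and p: "Factorial_Ring.prime (p::nat)" and P: "syl G p P"
    and Q: "subgroup Q G" and cQ: "card Q = p ^ j"
  shows "\<exists>g\<in>carrier G. Q \<subseteq> conjset G g P"
proof -
  interpret P: subgroup P G using P unfolding syl_def by blast
  interpret Q: subgroup Q G by fact
  interpret GQ: group "G\<lparr>carrier := Q\<rparr>" using subgroup_imp_group Q .
  define act where "act q C = C #> inv q" for q C
  have finE: "finite (rcosets P)"
    by (rule finite_subset[OF rcosets_subset_PowG[OF P.subgroup_axioms]]) (simp add: fin)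
  have "\<exists>C\<in>rcosets P. \<forall>g\<in>carrier (G\<lparr>carrier := Q\<rparr>). act g C = C"
  proof (rule pgroup_fixed_point[OF GQ.is_group p _ finE syl_index_ndvd[OF fin p P]])
    show "order (G\<lparr>carrier := Q\<rparr>) = p ^ j" using cQ unfolding order_def by simp
    fix g C assume g: "g \<in> carrier (G\<lparr>carrier := Q\<rparr>)" and C: "C \<in> rcosets P"
    then obtain a where a: "a \<in> carrier G" "C = P #> a" unfolding RCOSETS_def by auto
    have gc: "g \<in> carrier G" using g Q.mem_carrier by simp
    show "act g C \<in> rcosets P" unfolding act_def a(2)
      using a gc by (simp add: coset_mult_assoc rcosetsI P.subset)
  next
    fix C assume C: "C \<in> rcosets P"
    then show "act \<one>\<^bsub>G\<lparr>carrier := Q\<rparr>\<^esub> C = C" unfolding act_def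
      using P.rcosets_carrier[OF is_group C] by simp
  next
    fix g h C assume g: "g \<in> carrier (G\<lparr>carrier := Q\<rparr>)" and h: "h \<in> carrier (G\<lparr>carrier := Q\<rparr>)"
      and C: "C \<in> rcosets P"
    have gc: "g \<in> carrier G" "h \<in> carrier G" using g h Q.mem_carrier by auto
    show "act (g \<otimes>\<^bsub>G\<lparr>carrier := Q\<rparr>\<^esub> h) C = act g (act h C)" unfolding act_def
      using gc P.rcosets_carrier[OF is_group C] by (simp add: coset_mult_assoc inv_mult_group)
  qed
  then obtain C where C: "C \<in> rcosets P" and fix_: "\<And>q. q \<in> Q \<Longrightarrow> C #> inv q = C"
    unfolding act_def by auto
  obtain a where a: "a \<in> carrier G" "C = P #> a" using C unfolding RCOSETS_def by auto
  have "q \<in> conjset G (inv a) P" if q: "q \<in> Q" for q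
  proof -
    have qc: "q \<in> carrier G" using q Q.mem_carrier by auto
    have "P #> a #> inv (inv q) = P #> a" using fix_[of "inv q"] q a by (simp add: Q.m_inv_closed)
    then have "P #> (a \<otimes> q) = P #> a" using a qc by (simp add: coset_mult_assoc P.subset)
    then have "P #> ((a \<otimes> q) \<otimes> inv a) = P" using coset_mult_inv2[of P "a \<otimes> q" a] a qc P.subset by simp
    then have m: "a \<otimes> q \<otimes> inv a \<in> P" using coset_join1[of P] a qc P.subgroup_axioms by simp
    have "q = inv a \<otimes> (a \<otimes> q \<otimes> inv a) \<otimes> inv (inv a)" using a qc by (simp add: m_assoc)
    then show ?thesis using conjset_mem[OF m, of "inv a"] by simp
  qed
  then show ?thesis using a by blast
qed

lemma sylow_conj:
  assumes fin: "finite (carrier G)" and p: "Factorial_Ring.prime (p::nat)" and P: "syl G p P"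
    and Q: "syl G p Q"
  shows "\<exists>g\<in>carrier G. Q = conjset G g P"
proof -
  obtain g where g: "g \<in> carrier G" "Q \<subseteq> conjset G g P"
    using sylow_conj_contains[OF fin p P, of Q] Q unfolding syl_def by blast
  have "card (conjset G g P) = card P" using card_conjset g P unfolding syl_def
    by (simp add: subgroup.subset)
  moreover have "finite (conjset G g P)"
    using conjset_sub[of P g] P g fin unfolding syl_def by (meson finite_subset subgroup.subset)
  ultimately have "Q = conjset G g P" using g P Q unfolding syl_def by (simp add: card_subset_eq)
  then show ?thesis using g by blast
qed

end



definition crep :: "'a set \<Rightarrow> 'a" where "crep C = (SOME r. r \<in> C)"

locale tfrloc = group +
  fixes P
  assumes finG: "finite (carrier G)" and subP: "subgroup P G" and abP: "abel G P"
begin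

abbreviation "PG \<equiv> G\<lparr>carrier := P\<rparr>"

lemma PG_comm: "comm_group PG"
proof -
  interpret PG0: group PG using subgroup_imp_group[OF subP] .
  show ?thesis by (rule PG0.group_comm_groupI) (use abP in \<open>auto simp: abel_def\<close>)
qed

sublocale PG: comm_group PG by (rule PG_comm)

definition tf :: "'a \<Rightarrow> 'a set \<Rightarrow> 'a" where
  "tf g C = crep C \<otimes> g \<otimes> inv (crep (C #> g))"

definition V :: "'a \<Rightarrow> 'a" where
  "V g = finprod PG (\<lambda>C. tf g C) (rcosets P)"

lemma P_sub: "P \<subseteq> carrier G" using subgroup.subset[OF subP] .

lemma finR: "finite (rcosets P)"
  by (rule finite_subset[OF rcosets_subset_PowG[OF subP]]) (simp add: finG)

lemma crep_in: "C \<in> rcosets P \<Longrightarrow> crep C \<in> C"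
  unfolding crep_def RCOSETS_def
  by (rule someI_ex) (auto intro: rcos_self[OF _ subP])

lemma crep_carrier: "C \<in> rcosets P \<Longrightarrow> crep C \<in> carrier G"
  using crep_in subgroup.rcosets_carrier[OF subP is_group] by blast

lemma coset_eq_crep: "C \<in> rcosets P \<Longrightarrow> C = P #> crep C"
proof -
  assume C: "C \<in> rcosets P"
  then obtain a where a: "a \<in> carrier G" "C = P #> a" unfolding RCOSETS_def by auto
  show ?thesis using repr_independence[OF _ a(1) subP] crep_in[OF C] a by simp
qed

lemma rcosets_mult: "C \<in> rcosets P \<Longrightarrow> g \<in> carrier G \<Longrightarrow> C #> g \<in> rcosets P"
  unfolding RCOSETS_def by (auto simp: coset_mult_assoc P_sub)

lemma rcosets_assoc: "C \<in> rcosets P \<Longrightarrow> g \<in> carrier G \<Longrightarrow> h \<in> carrier G \<Longrightarrow> C #> g #> h = C #> (g \<otimes> h)"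
  using coset_mult_assoc subgroup.rcosets_carrier[OF subP is_group] by blast

lemma rcosets_one: "C \<in> rcosets P \<Longrightarrow> C #> \<one> = C"
  using coset_mult_one subgroup.rcosets_carrier[OF subP is_group] by blast

lemma same_coset: "C \<in> rcosets P \<Longrightarrow> a \<in> C \<Longrightarrow> b \<in> C \<Longrightarrow> a \<otimes> inv b \<in> P"
proof -
  assume C: "C \<in> rcosets P" and ab: "a \<in> C" "b \<in> C"
  obtain c where c: "c \<in> carrier G" "C = P #> c" using C unfolding RCOSETS_def by auto
  have "P #> b = P #> c" using repr_independence[OF _ c(1) subP] ab c by simp
  then have "a \<in> P #> b" using ab c by simp
  moreover have "a \<in> carrier G" "b \<in> carrier G" using ab C subgroup.rcosets_carrier[OF subP is_group] by auto
  ultimately show ?thesis using subgroup.rcos_module_imp[OF subP is_group] by blast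
qed

lemma tf_in: "C \<in> rcosets P \<Longrightarrow> g \<in> carrier G \<Longrightarrow> tf g C \<in> P"
proof -
  assume C: "C \<in> rcosets P" and g: "g \<in> carrier G"
  have "crep C \<otimes> g \<in> C #> g"
    using crep_in[OF C] g unfolding r_coset_def by auto
  moreover have "crep (C #> g) \<in> C #> g" using crep_in rcosets_mult C g by blast
  ultimately show ?thesis unfolding tf_def
    using same_coset[OF rcosets_mult[OF C g]] by (simp add: m_assoc)
qed

lemma tf_Pi: "g \<in> carrier G \<Longrightarrow> (\<lambda>C. tf g C) \<in> rcosets P \<rightarrow> P"
  using tf_in by auto

lemma V_in: "g \<in> carrier G \<Longrightarrow> V g \<in> P"
  unfolding V_def using PG.finprod_closed[of "\<lambda>C. tf g C" "rcosets P"] tf_Pi by simp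

lemma tf_mult:
  assumes C: "C \<in> rcosets P" and g: "g \<in> carrier G" and h: "h \<in> carrier G"
  shows "tf (g \<otimes> h) C = tf g C \<otimes> tf h (C #> g)"
proof -
  have c1: "crep C \<in> carrier G" "crep (C #> g) \<in> carrier G" "crep (C #> g #> h) \<in> carrier G"
    using crep_carrier rcosets_mult C g h by auto
  have "tf g C \<otimes> tf h (C #> g) = crep C \<otimes> g \<otimes> (inv (crep (C #> g)) \<otimes> crep (C #> g)) \<otimes> h \<otimes> inv (crep (C #> g #> h))"
    unfolding tf_def using c1 g h by (simp add: m_assoc)
  also have "\<dots> = crep C \<otimes> (g \<otimes> h) \<otimes> inv (crep (C #> (g \<otimes> h)))"
    using c1 g h rcosets_assoc[OF C g h] by (simp add: m_assoc)
  finally show ?thesis unfolding tf_def by simp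
qed

lemma bij_rmult: "g \<in> carrier G \<Longrightarrow> bij_betw (\<lambda>C. C #> g) (rcosets P) (rcosets P)"
proof -
  assume g: "g \<in> carrier G"
  show ?thesis
  proof (rule bij_betwI[where g = "\<lambda>C. C #> inv g"])
    show "(\<lambda>C. C #> g) \<in> rcosets P \<rightarrow> rcosets P" using rcosets_mult g by auto
    show "(\<lambda>C. C #> inv g) \<in> rcosets P \<rightarrow> rcosets P" using rcosets_mult g by auto
    show "\<And>x. x \<in> rcosets P \<Longrightarrow> x #> g #> inv g = x" using rcosets_assoc rcosets_one g by simp
    show "\<And>y. y \<in> rcosets P \<Longrightarrow> y #> inv g #> g = y" using rcosets_assoc rcosets_one g by simp
  qed
qed

lemma V_mult:
  assumes g: "g \<in> carrier G" and h: "h \<in> carrier G"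
  shows "V (g \<otimes> h) = V g \<otimes> V h"
proof -
  have "V (g \<otimes> h) = finprod PG (\<lambda>C. tf g C \<otimes>\<^bsub>PG\<^esub> tf h (C #> g)) (rcosets P)"
    unfolding V_def using tf_mult g h by (intro PG.finprod_cong') (auto intro!: subgroup.m_closed[OF subP] tf_in rcosets_mult)
  also have "\<dots> = V g \<otimes>\<^bsub>PG\<^esub> finprod PG (\<lambda>C. tf h (C #> g)) (rcosets P)"
    unfolding V_def by (rule PG.finprod_multf) (auto intro!: tf_in rcosets_mult g h)
  also have "finprod PG (\<lambda>C. tf h (C #> g)) (rcosets P) = V h"
  proof -
    have "V h = finprod PG (\<lambda>C. tf h C) ((\<lambda>C. C #> g) ` (rcosets P))"
      unfolding V_def using bij_rmult[OF g] by (simp add: bij_betw_def)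
    also have "\<dots> = finprod PG (\<lambda>C. tf h (C #> g)) (rcosets P)"
      by (rule PG.finprod_reindex) (use bij_rmult[OF g] tf_in h in \<open>auto simp: bij_betw_def\<close>)
    finally show ?thesis by simp
  qed
  finally show ?thesis by simp
qed

lemma V_hom: "V \<in> hom G PG"
  by (rule homI) (auto simp: V_in V_mult)


lemma rc_cancel:
  assumes "D \<in> rcosets P" "D' \<in> rcosets P" "c \<in> carrier G" "D #> c = D' #> c"
  shows "D = D'"
proof -
  have e1: "D #> c #> inv c = D" using rcosets_assoc[OF assms(1) assms(3) inv_closed[OF assms(3)]] rcosets_one[OF assms(1)] assms(3) by simp
  have e2: "D' #> c #> inv c = D'" using rcosets_assoc[OF assms(2) assms(3) inv_closed[OF assms(3)]] rcosets_one[OF assms(2)] assms(3) by simp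
  show ?thesis using e1 e2 assms(4) by metis
qed

lemma rc_pow: "C \<in> rcosets P \<Longrightarrow> u \<in> carrier G \<Longrightarrow> C #> u [^] (i::nat) \<in> rcosets P"
  using rcosets_mult by simp

lemma rc_pow_Suc: "C \<in> rcosets P \<Longrightarrow> u \<in> carrier G \<Longrightarrow> C #> u [^] (Suc i) = C #> u [^] i #> u"
  using rcosets_assoc by simp

lemma rc_pow_add: "C \<in> rcosets P \<Longrightarrow> u \<in> carrier G \<Longrightarrow> C #> u [^] (i + j::nat) = C #> u [^] i #> u [^] j"
  using rcosets_assoc by (simp add: nat_pow_mult)

lemma telescope:
  assumes C: "C \<in> rcosets P" and u: "u \<in> P"
  shows "finprod PG (\<lambda>i. tf u (C #> u [^] i)) {..<(m::nat)} = crep C \<otimes> u [^] m \<otimes> inv (crep (C #> u [^] m))"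
proof (induction m)
  case 0
  have "crep C \<in> carrier G" using crep_carrier C by blast
  then show ?case using rcosets_one[OF C] by simp
next
  case (Suc m)
  have uc: "u \<in> carrier G" using u P_sub by auto
  let ?D = "C #> u [^] m"
  have D: "?D \<in> rcosets P" using rc_pow[OF C uc] .
  have c1: "crep C \<in> carrier G" "crep ?D \<in> carrier G" "crep (?D #> u) \<in> carrier G"
    using crep_carrier C D rcosets_mult uc by auto
  have f1: "tf u ?D \<in> P" using tf_in[OF D uc] .
  have f2: "finprod PG (\<lambda>i. tf u (C #> u [^] i)) {..<m} \<in> P"
    using PG.finprod_closed[of "\<lambda>i. tf u (C #> u [^] i)" "{..<m}"] tf_in rc_pow[OF C uc] uc by auto
  have "finprod PG (\<lambda>i. tf u (C #> u [^] i)) {..<Suc m}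
      = tf u ?D \<otimes> finprod PG (\<lambda>i. tf u (C #> u [^] i)) {..<m}"
    unfolding lessThan_Suc using PG.finprod_insert[of "{..<m}" m "\<lambda>i. tf u (C #> u [^] i)"]
      tf_in rc_pow[OF C uc] uc by auto
  also have "\<dots> = finprod PG (\<lambda>i. tf u (C #> u [^] i)) {..<m} \<otimes> tf u ?D"
    using PG.m_comm[of "tf u ?D" "finprod PG (\<lambda>i. tf u (C #> u [^] i)) {..<m}"] f1 f2 by simp
  also have "\<dots> = (crep C \<otimes> u [^] m \<otimes> inv (crep ?D)) \<otimes> tf u ?D"
    by (simp only: Suc.IH)
  also have "\<dots> = crep C \<otimes> u [^] m \<otimes> (inv (crep ?D) \<otimes> crep ?D) \<otimes> u \<otimes> inv (crep (?D #> u))"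
    unfolding tf_def using c1 uc by (simp add: m_assoc)
  also have "\<dots> = crep C \<otimes> u [^] Suc m \<otimes> inv (crep (C #> u [^] Suc m))"
    using c1 uc rc_pow_Suc[OF C uc] by (simp add: m_assoc)
  finally show ?case .
qed

lemma V_eval_inv:
  assumes u: "u \<in> P"
    and fus: "\<And>w g. w \<in> P \<Longrightarrow> g \<in> carrier G \<Longrightarrow> g \<otimes> w \<otimes> inv g \<in> P \<Longrightarrow> g \<otimes> w \<otimes> inv g = w"
  shows "S \<subseteq> rcosets P \<Longrightarrow> (\<forall>D\<in>S. D #> u \<in> S) \<Longrightarrow> finprod PG (tf u) S = u [^] card S"
proof (induction "card S" arbitrary: S rule: less_induct)
  case less
  have uc: "u \<in> carrier G" using u P_sub by auto
  have finS: "finite S" using less.prems finR finite_subset by blast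
  show ?case
  proof (cases "S = {}")
    case True then show ?thesis by simp
  next
    case False
    then obtain C where CS: "C \<in> S" by blast
    have C: "C \<in> rcosets P" using CS less.prems by blast
    have ordpos: "ord u > 0" using ord_ge_1[OF finG uc] by simp
    have ex: "0 < ord u \<and> C #> u [^] ord u = C" using ordpos rcosets_one[OF C] uc by simp
    define k where "k = (LEAST k::nat. 0 < k \<and> C #> u [^] k = C)"
    have k: "0 < k" "C #> u [^] k = C" using LeastI_ex[of "\<lambda>k::nat. 0 < k \<and> C #> u [^] k = C"] ex
      unfolding k_def by blast+
    have kmin: "\<not> (C #> u [^] j = C)" if "0 < j" "j < k" for j::nat
      using not_less_Least[of j "\<lambda>k::nat. 0 < k \<and> C #> u [^] k = C"] that unfolding k_def by blast
    define Orb where "Orb = (\<lambda>i. C #> u [^] i) ` {..<k}"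
    have inS: "C #> u [^] i \<in> S" for i::nat
    proof (induction i)
      case 0 then show ?case using CS rcosets_one[OF C] by simp
    next
      case (Suc i) then show ?case using less.prems(2) rc_pow_Suc[OF C uc] by simp
    qed
    have OS: "Orb \<subseteq> S" unfolding Orb_def using inS by auto
    have finO: "finite Orb" unfolding Orb_def by simp
    have inj: "inj_on (\<lambda>i. C #> u [^] i) {..<k}"
    proof (rule inj_onI, rule ccontr)
      fix i j assume ij: "i \<in> {..<k}" "j \<in> {..<k}" "C #> u [^] i = C #> u [^] j" "i \<noteq> j"
      have gen: False if "a < b" "b < k" "C #> u [^] a = C #> u [^] b" for a b :: nat
      proof -
        have "C #> u [^] (b - a) #> u [^] a = C #> u [^] a"
          using that rc_pow_add[OF C uc, of "b - a" a] by simp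
        then have "C #> u [^] (b - a) = C"
          using rc_cancel[OF rc_pow[OF C uc] C, of "u [^] a"] uc by simp
        then show False using kmin[of "b - a"] that by simp
      qed
      show False using ij gen[of i j] gen[of j i] by (cases "i < j") auto
    qed
    have cardO: "card Orb = k" unfolding Orb_def using card_image[OF inj] by simp
    have "C #> u [^] (0::nat) = C" using rcosets_one[OF C] by simp
    then have Onon: "C \<in> Orb" unfolding Orb_def using k(1) by (metis image_eqI lessThan_iff)
    have inv_inO: "D \<in> Orb" if D: "D \<in> rcosets P" "D #> u \<in> Orb" for D
    proof -
      obtain i where i: "i < k" "D #> u = C #> u [^] i" using D unfolding Orb_def by auto
      show ?thesis
      proof (cases i)
        case 0
        have k1: "C #> u [^] (k - 1) #> u = C #> u [^] k" using rc_pow_Suc[OF C uc, of "k - 1"] k(1) by simp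
        have "D #> u = C #> u [^] (k - 1) #> u" using i 0 k1 k(2) rcosets_one[OF C] by simp
        then have "D = C #> u [^] (k - 1)" using rc_cancel[OF D(1) rc_pow[OF C uc] uc] by simp
        then show ?thesis unfolding Orb_def using k(1) by auto
      next
        case (Suc i')
        have "D #> u = C #> u [^] i' #> u" using i Suc rc_pow_Suc[OF C uc] by simp
        then have "D = C #> u [^] i'" using rc_cancel[OF D(1) rc_pow[OF C uc] uc] by simp
        then show ?thesis unfolding Orb_def using i Suc by auto
      qed
    qed
    have SO1: "S - Orb \<subseteq> rcosets P" using less.prems(1) by blast
    have SO2: "\<forall>D\<in>S - Orb. D #> u \<in> S - Orb"
    proof
      fix D assume D: "D \<in> S - Orb"
      have "D #> u \<in> S" using D less.prems(2) by blast
      moreover have "D #> u \<notin> Orb" using inv_inO[of D] D SO1 by blast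
      ultimately show "D #> u \<in> S - Orb" by blast
    qed
    have "S - Orb \<subset> S" using Onon CS by blast
    then have lt: "card (S - Orb) < card S" using psubset_card_mono[OF finS] by blast
    have IH: "finprod PG (tf u) (S - Orb) = u [^] card (S - Orb)"
      using less.hyps[OF lt SO1 SO2] .
    have tfS: "tf u D \<in> P" if "D \<in> S" for D using tf_in[OF _ uc] that less.prems(1) by blast
    have Pi1: "tf u \<in> Orb \<rightarrow> P" "tf u \<in> (S - Orb) \<rightarrow> P" using tfS OS by blast+
    have A: "finprod PG (tf u) S = finprod PG (tf u) Orb \<otimes> finprod PG (tf u) (S - Orb)"
    proof -
      have "S = Orb \<union> (S - Orb)" using OS by auto
      then have "finprod PG (tf u) S = finprod PG (tf u) (Orb \<union> (S - Orb))" by simp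
      also have "\<dots> = finprod PG (tf u) Orb \<otimes>\<^bsub>PG\<^esub> finprod PG (tf u) (S - Orb)"
        using PG.finprod_Un_disjoint[of Orb "S - Orb" "tf u"] finS finO Pi1 by auto
      finally show ?thesis by simp
    qed
    have B: "finprod PG (tf u) Orb = u [^] k"
    proof -
      have "finprod PG (tf u) Orb = finprod PG (\<lambda>i. tf u (C #> u [^] i)) {..<k}"
        unfolding Orb_def by (rule PG.finprod_reindex) (use inj Pi1 Orb_def in auto)
      also have "\<dots> = crep C \<otimes> u [^] k \<otimes> inv (crep C)"
        using telescope[OF C u, of k] k(2) by simp
      also have "\<dots> = u [^] k"
      proof (rule fus)
        show "u [^] k \<in> P" using PG.nat_pow_closed[of u k] u nat_pow_consistent[of u k P] by simp
        show "crep C \<in> carrier G" using crep_carrier[OF C] .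
        have "finprod PG (\<lambda>i. tf u (C #> u [^] i)) {..<k} \<in> P"
          using PG.finprod_closed[of "\<lambda>i. tf u (C #> u [^] i)" "{..<k}"] tf_in rc_pow[OF C uc] uc by auto
        then show "crep C \<otimes> u [^] k \<otimes> inv (crep C) \<in> P"
          using telescope[OF C u, of k] k(2) by simp
      qed
      finally show ?thesis .
    qed
    have Cc: "u [^] k \<otimes> u [^] card (S - Orb) = u [^] card S"
    proof -
      have "card (S - Orb) = card S - card Orb" using card_Diff_subset[OF finO OS] .
      moreover have "card Orb \<le> card S" using card_mono[OF finS OS] .
      ultimately have "card S = card Orb + card (S - Orb)" by linarith
      then show ?thesis using cardO uc by (simp add: nat_pow_mult)
    qed
    show ?thesis using A B Cc IH by simp
  qed
qed

lemma V_eval: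
  assumes u: "u \<in> P"
    and fus: "\<And>w g. w \<in> P \<Longrightarrow> g \<in> carrier G \<Longrightarrow> g \<otimes> w \<otimes> inv g \<in> P \<Longrightarrow> g \<otimes> w \<otimes> inv g = w"
  shows "V u = u [^] card (rcosets P)"
proof -
  have uc: "u \<in> carrier G" using u P_sub by auto
  have "finprod PG (tf u) (rcosets P) = u [^] card (rcosets P)"
    using V_eval_inv[OF u fus, of "rcosets P"] rcosets_mult uc by blast
  moreover have "V u = finprod PG (tf u) (rcosets P)" unfolding V_def by simp
  ultimately show ?thesis by simp
qed

end



context group
begin

lemma subgroup_sub_nrm:
  assumes fin: "finite (carrier G)" and H: "subgroup H G"
  shows "H \<subseteq> nrm G H"
proof
  fix h assume h: "h \<in> H"
  have hc: "h \<in> carrier G" using h subgroup.mem_carrier[OF H] by blast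
  have "conjset G h H \<subseteq> H" unfolding conjset_def
    using h H by (auto intro!: subgroup.m_closed subgroup.m_inv_closed)
  then show "h \<in> nrm G H" using nrm_iff_sub[OF fin subgroup.subset[OF H] hc] by blast
qed

lemma conjset_consistent:
  assumes "subgroup H G" "c \<in> H"
  shows "conjset (G\<lparr>carrier := H\<rparr>) c A = conjset G c A"
  unfolding conjset_def using m_inv_consistent[OF assms] by simp

lemma fusion:
  assumes fin: "finite (carrier G)" and p: "Factorial_Ring.prime (p::nat)" and P: "syl G p P"
    and ab: "abel G (nrm G P)"
    and w: "w \<in> P" and g: "g \<in> carrier G" and y: "g \<otimes> w \<otimes> inv g \<in> P"
  shows "g \<otimes> w \<otimes> inv g = w"
proof -
  have sP: "subgroup P G" using P unfolding syl_def by blast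
  have Psub: "P \<subseteq> carrier G" using subgroup.subset[OF sP] .
  have PN: "P \<subseteq> nrm G P" using subgroup_sub_nrm[OF fin sP] .
  have abP: "abel G P" using ab PN unfolding abel_def by blast
  define y where "y = g \<otimes> w \<otimes> inv g"
  have yP: "y \<in> P" using y unfolding y_def .
  have wc: "w \<in> carrier G" using w Psub by blast
  have yc: "y \<in> carrier G" using yP Psub by blast
  define Cy where "Cy = cent G {y}"
  have sC: "subgroup Cy G" unfolding Cy_def using cent_subgroup yc by blast
  have PC: "P \<subseteq> Cy" unfolding Cy_def cent_def using abP yP Psub unfolding abel_def by blast
  define P' where "P' = conjset G g P"
  have sP': "subgroup P' G" unfolding P'_def using conjset_subgroup[OF sP g] .
  have P'C: "P' \<subseteq> Cy"
  proof
    fix z assume "z \<in> P'"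
    then obtain a where a: "a \<in> P" "z = g \<otimes> a \<otimes> inv g" unfolding P'_def conjset_def by auto
    have ac: "a \<in> carrier G" using a Psub by blast
    have aw: "a \<otimes> w = w \<otimes> a" using abP a w unfolding abel_def by blast
    have "z \<otimes> y = g \<otimes> (a \<otimes> w) \<otimes> inv g" unfolding a y_def using ac wc g by (simp add: m_assoc)
    also have "\<dots> = g \<otimes> (w \<otimes> a) \<otimes> inv g" using aw by simp
    also have "\<dots> = y \<otimes> z" unfolding a y_def using ac wc g by (simp add: m_assoc)
    finally show "z \<in> Cy" unfolding Cy_def cent_def using a ac g by auto
  qed
  interpret GC: group "G\<lparr>carrier := Cy\<rparr>" using subgroup_imp_group[OF sC] .
  have finC: "finite (carrier (G\<lparr>carrier := Cy\<rparr>))"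
    using fin subgroup.subset[OF sC] finite_subset by auto
  have ordC: "order (G\<lparr>carrier := Cy\<rparr>) = card Cy" by (simp add: order_def)
  define m where "m = multiplicity p (order G)"
  have cardP: "card P = p ^ m" using P unfolding syl_def m_def by blast
  have cardP': "card P' = p ^ m" unfolding P'_def using card_conjset[OF g Psub] cardP by simp
  have Cpos: "card Cy \<noteq> 0"
    using subgroup.one_closed[OF sC] finite_subset[OF subgroup.subset[OF sC] fin] by auto
  have p1: "p \<noteq> Suc 0" using prime_gt_1_nat[OF p] by simp
  have "multiplicity p (card Cy) = m"
  proof (rule antisym)
    have "card Cy dvd order G" using card_subgroup_dvd_order[OF sC] .
    then show "multiplicity p (card Cy) \<le> m" unfolding m_def
      using dvd_imp_multiplicity_le[of "card Cy" "order G" p] order_pos[OF fin] by simp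
    have "p ^ m dvd card Cy" using subgroup_card_dvd[OF sP sC PC] cardP by simp
    then show "m \<le> multiplicity p (card Cy)"
      using power_dvd_iff_le_multiplicity[of "card Cy" p m] Cpos p1 by simp
  qed
  then have sylP: "syl (G\<lparr>carrier := Cy\<rparr>) p P" and sylP': "syl (G\<lparr>carrier := Cy\<rparr>) p P'"
    unfolding syl_def ordC using subgroup_incl[OF sP sC PC] subgroup_incl[OF sP' sC P'C] cardP cardP'
    by auto
  obtain c where c: "c \<in> Cy" "P' = conjset (G\<lparr>carrier := Cy\<rparr>) c P"
    using GC.sylow_conj[OF finC p sylP sylP'] by auto
  have cc: "c \<in> carrier G" using c subgroup.mem_carrier[OF sC] by blast
  have eq: "conjset G g P = conjset G c P" using c conjset_consistent[OF sC c(1)] unfolding P'_def by simp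
  define nn where "nn = inv c \<otimes> g"
  have nnc: "nn \<in> carrier G" unfolding nn_def using cc g by simp
  have "conjset G nn P = P" unfolding nn_def
    using conjset_mult[OF inv_closed[OF cc] g Psub] eq conjset_inv_cancel[OF cc Psub] by simp
  then have nnN: "nn \<in> nrm G P" unfolding nrm_def using nnc by simp
  have comm: "nn \<otimes> w = w \<otimes> nn" using ab nnN PN w unfolding abel_def by blast
  have cy: "c \<otimes> y = y \<otimes> c" using c(1) unfolding Cy_def cent_def by auto
  have "w = nn \<otimes> w \<otimes> inv nn" using comm nnc wc by (simp add: m_assoc)
  also have "\<dots> = inv c \<otimes> y \<otimes> c" unfolding nn_def y_def using cc g wc
    by (simp add: m_assoc inv_mult_group)
  also have "\<dots> = y" using cy cc yc by (simp add: m_assoc flip: cy)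
  finally show ?thesis unfolding y_def by simp
qed


lemma burnside_complement:
  assumes fin: "finite (carrier G)" and p: "Factorial_Ring.prime (p::nat)" and P: "syl G p P"
    and ab: "abel G (nrm G P)"
  shows "\<exists>K. K \<lhd> G \<and> card K * card P = order G"
proof -
  have sP: "subgroup P G" using P unfolding syl_def by blast
  have Psub: "P \<subseteq> carrier G" using subgroup.subset[OF sP] .
  have PN: "P \<subseteq> nrm G P" using subgroup_sub_nrm[OF fin sP] .
  have abP: "abel G P" using ab PN unfolding abel_def by blast
  interpret T: tfrloc G P
    by (rule tfrloc.intro[OF is_group tfrloc_axioms.intro[OF fin sP abP]])
  define n where "n = card (rcosets P)"
  have ndvd: "\<not> p dvd n" unfolding n_def using syl_index_ndvd[OF fin p P] .
  have Veval: "T.V u = u [^] n" if "u \<in> P" for u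
    unfolding n_def using T.V_eval[OF that] fusion[OF fin p P ab] by blast
  have powP: "u [^] (k::nat) \<in> P" if "u \<in> P" for u k
    using T.PG.nat_pow_closed[of u k] that nat_pow_consistent[of u k P] by simp
  define m where "m = multiplicity p (order G)"
  have cardP: "card P = p ^ m" using P unfolding syl_def m_def by blast
  have inj: "inj_on (\<lambda>u. u [^] n) P"
  proof (rule inj_onI)
    fix u v assume u: "u \<in> P" and v: "v \<in> P" and e: "u [^] n = v [^] n"
    have uc: "u \<in> carrier G" and vc: "v \<in> carrier G" using u v Psub by auto
    define w where "w = u \<otimes> inv v"
    have wP: "w \<in> P" unfolding w_def using u v sP by (simp add: subgroup.m_closed subgroup.m_inv_closed)
    have wc: "w \<in> carrier G" using wP Psub by blast
    have cm: "u \<otimes> inv v = inv v \<otimes> u" using abP u v sP unfolding abel_def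
      by (simp add: subgroup.m_inv_closed)
    have "w [^] n = u [^] n \<otimes> inv v [^] n" unfolding w_def using pow_mult_distrib[OF cm uc] vc by simp
    also have "\<dots> = \<one>" using e vc by (simp add: nat_pow_inv)
    finally have wn: "w [^] n = \<one>" .
    have "w [^]\<^bsub>T.PG\<^esub> order T.PG = \<one>\<^bsub>T.PG\<^esub>" using T.PG.pow_order_eq_1[of w] wP by simp
    then have wP1: "w [^] card P = \<one>" using nat_pow_consistent[of w "card P" P] by (simp add: order_def)
    have d1: "ord w dvd n" using wn pow_eq_id[OF wc] by simp
    have d2: "ord w dvd p ^ m" using wP1 pow_eq_id[OF wc] cardP by simp
    obtain i where i: "ord w = p ^ i" using d2 p by (auto simp: divides_primepow_nat)
    have "i = 0"
    proof (rule ccontr)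
      assume "i \<noteq> 0"
      then have "p dvd ord w" using i by simp
      then show False using d1 ndvd dvd_trans by blast
    qed
    then have "w = \<one>" using i ord_eq_1[OF wc] by simp
    moreover have "u = u \<otimes> inv v \<otimes> v" using uc vc by (simp add: m_assoc)
    ultimately show "u = v" unfolding w_def using vc by simp
  qed
  have finP: "finite P" using fin Psub finite_subset by blast
  have imP: "(\<lambda>u. u [^] n) ` P = P"
  proof (rule card_subset_eq[OF finP])
    show "(\<lambda>u. u [^] n) ` P \<subseteq> P" using powP by auto
    show "card ((\<lambda>u. u [^] n) ` P) = card P" using card_image[OF inj] .
  qed
  have Vim: "T.V ` carrier G = carrier T.PG"
  proof
    show "T.V ` carrier G \<subseteq> carrier T.PG" using T.V_in by auto
    have "(\<lambda>u. u [^] n) ` P = T.V ` P" by (rule image_cong[OF refl]) (simp add: Veval)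
    then have "P = T.V ` P" using imP by simp
    then show "carrier T.PG \<subseteq> T.V ` carrier G" using Psub by auto
  qed
  have hom: "group_hom G T.PG T.V"
    by (intro group_hom.intro is_group T.PG.is_group group_hom_axioms.intro T.V_hom)
  define K where "K = kernel G T.PG T.V"
  have nK: "K \<lhd> G" unfolding K_def using group_hom.normal_kernel[OF hom] .
  have "G Mod K \<cong> T.PG" unfolding K_def by (rule group_hom.FactGroup_iso[OF hom Vim])
  then have "card (carrier (G Mod K)) = card (carrier T.PG)" by (rule iso_same_card)
  then have c1: "card (rcosets K) = card P" by (simp add: FactGroup_def)
  have "card (rcosets K) * card K = order G" using lagrange[OF normal.axioms(1)[OF nK]] .
  then have "card K * card P = order G" using c1 by (simp add: mult.commute)
  then show ?thesis using nK by blast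
qed

end



lemma prime_dvd_pp2:
  fixes w a b :: nat
  assumes "Factorial_Ring.prime w" "Factorial_Ring.prime a" "Factorial_Ring.prime b" "w dvd a ^ i * b ^ j"
  shows "w = a \<or> w = b"
proof -
  have "w dvd a ^ i \<or> w dvd b ^ j" using assms(1,4) prime_dvd_mult_iff by blast
  then have "w dvd a \<or> w dvd b" using assms(1) prime_dvd_power by blast
  then show ?thesis using assms(1-3) primes_dvd_imp_eq by blast
qed

lemma prime_dvd_pp3:
  fixes w a b c :: nat
  assumes "Factorial_Ring.prime w" "Factorial_Ring.prime a" "Factorial_Ring.prime b" "Factorial_Ring.prime c"
    "w dvd a ^ i * b ^ j * c ^ l"
  shows "w = a \<or> w = b \<or> w = c"
proof -
  have "w dvd a ^ i * b ^ j \<or> w dvd c ^ l" using assms(1,5) prime_dvd_mult_iff by blast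
  then show ?thesis using prime_dvd_pp2[OF assms(1-3)] assms(1,4) prime_dvd_power primes_dvd_imp_eq by blast
qed

lemma avoid3:
  fixes Pi :: "nat set"
  assumes "4 \<le> card Pi"
  shows "\<exists>w\<in>Pi. w \<noteq> a \<and> w \<noteq> b \<and> w \<noteq> c"
proof (rule ccontr)
  assume "\<not> ?thesis"
  then have "Pi \<subseteq> {a, b, c}" by blast
  then have "card Pi \<le> card {a, b, c}" by (simp add: card_mono)
  also have "\<dots> \<le> 3" by (simp add: card_insert_le_m1)
  finally show False using assms by simp
qed

context group
begin

lemma proper_by_dvd:
  assumes "subgroup H G" "card H dvd N" "w dvd order G" "\<not> w dvd N"
  shows "H \<noteq> carrier G"
  using assms unfolding order_def by (metis dvd_trans)

lemma abel_mono: "abel G H \<Longrightarrow> A \<subseteq> H \<Longrightarrow> abel G A"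
  unfolding abel_def by blast

lemma cyc_facts:
  assumes "x \<in> carrier G"
  shows "subgroup (generate G {x}) G" "x \<in> generate G {x}" "card (generate G {x}) = ord x"
  using generate_is_subgroup[of "{x}"] assms generate.incl[of x "{x}" G] generate_pow_card[OF assms]
  by auto

lemma cyc_in_subgroup:
  assumes "subgroup H G" "x \<in> H"
  shows "generate G {x} \<subseteq> H"
  using generate_subgroup_incl[of "{x}" H] assms by auto

lemma conj_trivial_if_comm:
  assumes "k \<in> carrier G" "A \<subseteq> carrier G" "\<And>a. a \<in> A \<Longrightarrow> k \<otimes> a = a \<otimes> k"
  shows "conjset G k A = A"
proof -
  have "k \<otimes> a \<otimes> inv k = a" if "a \<in> A" for a
    using assms that by (metis inv_closed m_assoc r_inv r_one subsetD)
  then show ?thesis unfolding conjset_def by (simp add: image_cong)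
qed

lemma normal_conj:
  assumes "K \<lhd> G" "g \<in> carrier G"
  shows "conjset G g K \<subseteq> K"
  unfolding conjset_def using normal.inv_op_closed2[OF assms(1) assms(2)] by auto

lemma card_subgroup_pos:
  assumes "finite (carrier G)" "subgroup H G"
  shows "card H > 0"
  using assms subgroup.one_closed[OF assms(2)] finite_subset[OF subgroup.subset[OF assms(2)]]
  by (metis card_gt_0_iff empty_iff)

lemma abel_unique_pp:
  assumes fin: "finite (carrier G)" and K: "subgroup K G" and abK: "abel G K"
    and s: "Factorial_Ring.prime (s::nat)"
    and S: "subgroup S G" "S \<subseteq> K" "card S = s ^ multiplicity s (card K)"
    and S': "subgroup S' G" "S' \<subseteq> K" "card S' = s ^ multiplicity s (card K)"
  shows "S = S'"
proof -
  define m where "m = multiplicity s (card K)"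
  have Ssub: "S \<subseteq> carrier G" "S' \<subseteq> carrier G" using subgroup.subset[OF S(1)] subgroup.subset[OF S'(1)] by auto
  have conj: "conjset G k S \<subseteq> S" if "k \<in> S'" for k
  proof -
    have "conjset G k S = S"
      using conj_trivial_if_comm[of k S] that Ssub S S' abK unfolding abel_def by blast
    then show ?thesis by simp
  qed
  have sub: "subgroup (S <#> S') G" using setmult_subgroup[OF S(1) S'(1) conj] .
  have inK: "S <#> S' \<subseteq> K" unfolding set_mult_def using S(2) S'(2) K
    by (auto intro: subgroup.m_closed)
  have pf: "card (S <#> S') * card (S \<inter> S') = s ^ m * s ^ m"
    using prod_formula[OF fin S(1) S'(1)] S(3) S'(3) unfolding m_def by simp
  have d1: "card (S <#> S') dvd s ^ (m + m)" using pf by (metis dvd_triv_left power_add)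
  then obtain i where i: "i \<le> m + m" "card (S <#> S') = s ^ i" using s by (auto simp: divides_primepow_nat)
  have d2: "s ^ i dvd card K" using subgroup_card_dvd[OF sub K inK] i by simp
  have Kpos: "card K \<noteq> 0" using card_subgroup_pos[OF fin K] by simp
  have s1: "s \<noteq> Suc 0" using prime_gt_1_nat[OF s] by simp
  have "i \<le> m" using d2 power_dvd_iff_le_multiplicity[of "card K" s i] Kpos s1 unfolding m_def by simp
  then have "s ^ i * s ^ (m + m - i) = s ^ m * s ^ m" by (simp flip: power_add)
  then have "card (S \<inter> S') = s ^ (m + m - i)" using pf i s
    by (metis mult_left_cancel power_not_zero prime_gt_0_nat not_gr0)
  moreover have "s ^ m \<le> s ^ (m + m - i)" using \<open>i \<le> m\<close> prime_gt_1_nat[OF s] by (intro power_increasing) auto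
  ultimately have "card S' \<le> card (S \<inter> S')" using S'(3) unfolding m_def by simp
  moreover have "finite S'" using fin Ssub finite_subset by blast
  ultimately have "S \<inter> S' = S'" by (meson Int_lower2 card_seteq)
  then have "S' \<subseteq> S" by blast
  moreover have "finite S" using fin Ssub finite_subset by blast
  ultimately show ?thesis using S(3) S'(3) card_subset_eq by metis
qed

lemma sylow_in_subgroup:
  assumes fin: "finite (carrier G)" and K: "subgroup K G" and s: "Factorial_Ring.prime (s::nat)"
  shows "\<exists>S. subgroup S G \<and> S \<subseteq> K \<and> card S = s ^ multiplicity s (card K)"
proof -
  interpret GK: group "G\<lparr>carrier := K\<rparr>" using subgroup_imp_group[OF K] .
  have finK: "finite (carrier (G\<lparr>carrier := K\<rparr>))" using fin subgroup.subset[OF K] finite_subset by auto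
  obtain S where S: "syl (G\<lparr>carrier := K\<rparr>) s S" using GK.syl_exists[OF finK s] by blast
  have "subgroup S G" using incl_subgroup[OF K] S unfolding syl_def by blast
  moreover have "S \<subseteq> K" using S subgroup.subset unfolding syl_def by fastforce
  moreover have "card S = s ^ multiplicity s (card K)" using S unfolding syl_def by (simp add: order_def)
  ultimately show ?thesis by blast
qed

end



locale crit = group +
  fixes x and p :: nat and k :: nat
  assumes fin: "finite (carrier G)"
    and nonab: "\<not> abel G (carrier G)"
    and xc: "x \<in> carrier G"
    and p: "Factorial_Ring.prime p"
    and ordx: "ord x = p ^ k"
    and star: "\<And>H. subgroup H G \<Longrightarrow> x \<in> H \<Longrightarrow> H \<noteq> carrier G \<Longrightarrow> abel G H"
    and four: "4 \<le> card (prime_factors (order G))"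
begin

abbreviation "Cyc \<equiv> generate G {x}"

lemma Cyc: "subgroup Cyc G" "x \<in> Cyc" "card Cyc = p ^ k"
  using cyc_facts[OF xc] ordx by auto

lemma opos: "order G > 0" using order_pos[OF fin] .

lemma w_exists:
  "\<exists>w. Factorial_Ring.prime w \<and> w dvd order G \<and> w \<noteq> a \<and> w \<noteq> b \<and> w \<noteq> c"
  using avoid3[OF four, of a b c] opos by auto

lemma proper3:
  assumes "subgroup H G" "card H dvd a ^ i * b ^ j * c ^ l"
    "Factorial_Ring.prime a" "Factorial_Ring.prime b" "Factorial_Ring.prime c"
  shows "H \<noteq> carrier G"
proof -
  obtain w where w: "Factorial_Ring.prime w" "w dvd order G" "w \<noteq> a" "w \<noteq> b" "w \<noteq> c"
    using w_exists by blast
  have "\<not> w dvd a ^ i * b ^ j * c ^ l" using prime_dvd_pp3[OF w(1) assms(3-5)] w by blast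
  then show ?thesis using proper_by_dvd[OF assms(1,2) w(2)] by blast
qed

lemma proper2:
  assumes "subgroup H G" "card H dvd a ^ i * b ^ j"
    "Factorial_Ring.prime a" "Factorial_Ring.prime b"
  shows "H \<noteq> carrier G"
  using proper3[OF assms(1) _ assms(3,4,4), of i j 0] assms(2) by simp

lemma star3:
  assumes "subgroup H G" "x \<in> H" "card H dvd a ^ i * b ^ j * c ^ l"
    "Factorial_Ring.prime a" "Factorial_Ring.prime b" "Factorial_Ring.prime c"
  shows "abel G H"
  using star[OF assms(1,2) proper3[OF assms(1,3-6)]] .

lemma star2:
  assumes "subgroup H G" "x \<in> H" "card H dvd a ^ i * b ^ j"
    "Factorial_Ring.prime a" "Factorial_Ring.prime b"
  shows "abel G H"
  using star[OF assms(1,2) proper2[OF assms(1,3-5)]] .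

lemma mult_pos_dvd: "r dvd order G \<Longrightarrow> Factorial_Ring.prime r \<Longrightarrow> multiplicity r (order G) > 0"
  using multiplicity_eq_zero_iff[of "order G" r] opos prime_gt_1_nat[of r] by fastforce

lemma cent_fill:
  assumes "A \<subseteq> carrier G"
    and "\<And>s. Factorial_Ring.prime s \<Longrightarrow> s dvd order G \<Longrightarrow>
       \<exists>S. subgroup S G \<and> card S = s ^ multiplicity s (order G) \<and> (\<forall>a\<in>A. \<forall>b\<in>S. a \<otimes> b = b \<otimes> a)"
  shows "cent G A = carrier G"
proof (rule fill_subgroup[OF fin cent_subgroup[OF assms(1)]])
  fix s :: nat assume s: "Factorial_Ring.prime s" "s dvd order G"
  obtain S where S: "subgroup S G" "card S = s ^ multiplicity s (order G)" "\<forall>a\<in>A. \<forall>b\<in>S. a \<otimes> b = b \<otimes> a"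
    using assms(2)[OF s] by blast
  have "S \<subseteq> cent G A" unfolding cent_def using S subgroup.subset[OF S(1)] by auto
  then show "\<exists>R. subgroup R G \<and> R \<subseteq> cent G A \<and> card R = s ^ multiplicity s (order G)" using S by blast
qed

end



context crit
begin

lemma mult_other:
  assumes s: "Factorial_Ring.prime s" and r: "Factorial_Ring.prime r" and sr: "s \<noteq> r"
    and e: "order G = card K * r ^ b" and Kpos: "card K > 0"
  shows "multiplicity s (card K) = multiplicity s (order G)"
proof -
  have "multiplicity s (card K * r ^ b) = multiplicity s (card K) + multiplicity s (r ^ b)"
    using prime_elem_multiplicity_mult_distrib[of s "card K" "r ^ b"] s r Kpos
    by (simp add: prime_gt_0_nat)
  moreover have "multiplicity s (r ^ b) = 0" using multiplicity_distinct_prime_power[OF s r sr] .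
  ultimately show ?thesis using e by simp
qed

lemma abel_normal_sylow:
  assumes K: "subgroup K G" and nK: "K \<lhd> G" and abK: "abel G K" and s: "Factorial_Ring.prime s"
    and S: "subgroup S G" "S \<subseteq> K" "card S = s ^ multiplicity s (card K)"
    and g: "g \<in> carrier G"
  shows "conjset G g S \<subseteq> S"
proof -
  have Ssub: "S \<subseteq> carrier G" using subgroup.subset[OF S(1)] .
  have T: "subgroup (conjset G g S) G" using conjset_subgroup[OF S(1) g] .
  have TK: "conjset G g S \<subseteq> K" using conjset_mono[OF S(2), of g] normal_conj[OF nK g] by blast
  have cT: "card (conjset G g S) = s ^ multiplicity s (card K)" using card_conjset[OF g Ssub] S(3) by simp
  have "S = conjset G g S" using abel_unique_pp[OF fin K abK s S T TK cT] .
  then show ?thesis by simp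
qed

lemma case1:
  assumes cen: "\<And>g. g \<in> carrier G \<Longrightarrow> g \<otimes> x = x \<otimes> g"
  shows False
proof -
  have xZ: "x \<in> cent G (carrier G)" unfolding cent_def using cen xc by auto
  have CycZ: "Cyc \<subseteq> cent G (carrier G)" using cyc_in_subgroup[OF cent_subgroup[of "carrier G"] xZ] by simp
  have cycc: "c \<otimes> g = g \<otimes> c" if "c \<in> Cyc" "g \<in> carrier G" for c g
    using CycZ that unfolding cent_def by auto
  have Cycsub: "Cyc \<subseteq> carrier G" using subgroup.subset[OF Cyc(1)] .
  have AX: "subgroup (A <#> Cyc) G \<and> x \<in> A <#> Cyc \<and> A \<subseteq> A <#> Cyc \<and> Cyc \<subseteq> A <#> Cyc
      \<and> card (A <#> Cyc) dvd card A * p ^ k" if A: "subgroup A G" for A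
  proof (intro conjI)
    have Asub: "A \<subseteq> carrier G" using subgroup.subset[OF A] .
    show sAX: "subgroup (A <#> Cyc) G"
    proof (rule setmult_subgroup[OF A Cyc(1)])
      fix c assume c: "c \<in> Cyc"
      have "conjset G c A = A"
        using conj_trivial_if_comm[of c A] c Cycsub Asub cycc by blast
      then show "conjset G c A \<subseteq> A" by simp
    qed
    show "A \<subseteq> A <#> Cyc" using setmult_sup1[OF A Cyc(1)] .
    show "Cyc \<subseteq> A <#> Cyc" using setmult_sup2[OF A Cyc(1)] .
    then show "x \<in> A <#> Cyc" using Cyc(2) by blast
    show "card (A <#> Cyc) dvd card A * p ^ k" using prod_card_dvd[OF fin A Cyc(1)] Cyc(3) by simp
  qed
  have N1: "\<forall>g\<in>carrier G. conjset G g R \<subseteq> R"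
    if r: "Factorial_Ring.prime r" and rd: "r dvd order G" and rp: "r \<noteq> p" and R: "syl G r R" for r R
  proof (rule ccontr)
    assume nn: "\<not> (\<forall>g\<in>carrier G. conjset G g R \<subseteq> R)"
    have sR: "subgroup R G" using R unfolding syl_def by blast
    have Rsub: "R \<subseteq> carrier G" using subgroup.subset[OF sR] .
    define b where "b = multiplicity r (order G)"
    have cR: "card R = r ^ b" using R unfolding syl_def b_def by blast
    have bpos: "b > 0" unfolding b_def using mult_pos_dvd[OF rd r] .
    have Nne: "nrm G R \<noteq> carrier G"
    proof
      assume "nrm G R = carrier G"
      then have "conjset G g R \<subseteq> R" if "g \<in> carrier G" for g using that unfolding nrm_def by auto
      then show False using nn by blast
    qed
    have "conjset G x R = R" using conj_trivial_if_comm[OF xc Rsub] cen Rsub by (metis subsetD)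
    then have xN: "x \<in> nrm G R" unfolding nrm_def using xc by simp
    have abN: "abel G (nrm G R)" using star[OF nrm_subgroup[OF fin Rsub] xN Nne] .
    obtain K where nK: "K \<lhd> G" and cK: "card K * card R = order G"
      using burnside_complement[OF fin r R abN] by blast
    have sK: "subgroup K G" using normal.axioms(1)[OF nK] .
    have Kpos: "card K > 0" using card_subgroup_pos[OF fin sK] .
    have eG: "order G = card K * r ^ b" using cK cR by simp
    have xK: "x \<in> K"
    proof -
      have sKX: "subgroup (K <#> Cyc) G" using AX[OF sK] by blast
      have pf: "card (K <#> Cyc) * card (K \<inter> Cyc) = card K * p ^ k"
        using prod_formula[OF fin sK Cyc(1)] Cyc(3) by simp
      obtain t where t: "order G = card (K <#> Cyc) * t"
        using card_subgroup_dvd_order[OF sKX] by blast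
      have "card K * (r ^ b * card (K \<inter> Cyc)) = card K * (p ^ k * t)"
        using eG t pf by (metis mult.assoc mult.commute)
      then have e2: "r ^ b * card (K \<inter> Cyc) = p ^ k * t" using Kpos by simp
      have cop: "coprime (p ^ k) (r ^ b)"
        using primes_coprime[OF p r] rp by (simp add: coprime_power_left_iff coprime_power_right_iff)
      have "p ^ k dvd card (K \<inter> Cyc) * r ^ b" using e2 by (metis dvd_triv_left mult.commute)
      then have d: "p ^ k dvd card (K \<inter> Cyc)" using coprime_dvd_mult_left_iff[OF cop] by simp
      have finC: "finite Cyc" using fin Cycsub finite_subset by blast
      have "card (K \<inter> Cyc) > 0" using subgroup.one_closed[OF sK] subgroup.one_closed[OF Cyc(1)] finC
        by (metis IntI card_gt_0_iff empty_iff finite_Int)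
      then have "p ^ k \<le> card (K \<inter> Cyc)" using d by (simp add: dvd_imp_le)
      then have "card Cyc \<le> card (K \<inter> Cyc)" using Cyc(3) by simp
      then have "K \<inter> Cyc = Cyc" using finC by (meson Int_lower2 card_seteq)
      then show ?thesis using Cyc(2) by blast
    qed
    have Kne: "K \<noteq> carrier G"
    proof
      assume "K = carrier G"
      then have "card K = order G" by (simp add: order_def)
      moreover have "1 < r ^ b" using one_less_power[OF prime_gt_1_nat[OF r] bpos] .
      then have "card K * 2 \<le> card K * r ^ b" by (intro mult_le_mono2) simp
      ultimately show False using eG Kpos by linarith
    qed
    have abK: "abel G K" using star[OF sK xK Kne] .
    have cRG: "cent G R = carrier G"
    proof (rule cent_fill[OF Rsub])
      fix s :: nat assume s: "Factorial_Ring.prime s" "s dvd order G"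
      show "\<exists>S. subgroup S G \<and> card S = s ^ multiplicity s (order G) \<and> (\<forall>a\<in>R. \<forall>b\<in>S. a \<otimes> b = b \<otimes> a)"
      proof (cases "s = r")
        case True
        have "abel G (R <#> Cyc)" using star2[OF conjunct1[OF AX[OF sR]] conjunct1[OF conjunct2[OF AX[OF sR]]], of r b p k]
          AX[OF sR] cR r p by simp
        then have "abel G R" using AX[OF sR] abel_mono by blast
        then show ?thesis using sR cR True unfolding abel_def b_def by blast
      next
        case False
        obtain S where S: "subgroup S G" "S \<subseteq> K" "card S = s ^ multiplicity s (card K)"
          using sylow_in_subgroup[OF fin sK s(1)] by blast
        have ms: "multiplicity s (card K) = multiplicity s (order G)"
          using mult_other[OF s(1) r False eG Kpos] .
        have Sn: "conjset G g S \<subseteq> S" if "g \<in> carrier G" for g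
          using abel_normal_sylow[OF sK nK abK s(1) S that] .
        obtain RX where RX: "RX = R <#> Cyc" by blast
        have sRX: "subgroup RX G" and xRX: "x \<in> RX" and RRX: "R \<subseteq> RX"
          and cRX: "card RX dvd r ^ b * p ^ k"
          using AX[OF sR] RX cR by auto
        have sH: "subgroup (S <#> RX) G"
          by (rule setmult_subgroup[OF S(1) sRX]) (use Sn subgroup.mem_carrier[OF sRX] in blast)
        have xH: "x \<in> S <#> RX" using setmult_sup2[OF S(1) sRX] xRX by blast
        have cH: "card (S <#> RX) dvd s ^ multiplicity s (card K) * r ^ b * p ^ k"
          using prod_card_dvd[OF fin S(1) sRX] cRX S(3)
          by (metis dvd_trans mult.assoc mult_dvd_mono dvd_refl)
        have abH: "abel G (S <#> RX)" using star3[OF sH xH cH s(1) r p] .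
        have "R \<subseteq> S <#> RX" "S \<subseteq> S <#> RX"
          using RRX setmult_sup2[OF S(1) sRX] setmult_sup1[OF S(1) sRX] by auto
        then have "\<forall>a\<in>R. \<forall>b\<in>S. a \<otimes> b = b \<otimes> a" using abH unfolding abel_def by blast
        then show ?thesis using S(1) S(3) ms by auto
      qed
    qed
    have "\<forall>g\<in>carrier G. conjset G g R \<subseteq> R"
    proof
      fix g assume g: "g \<in> carrier G"
      have "g \<in> cent G R" using cRG g by simp
      then have "conjset G g R = R" using conj_trivial_if_comm[OF g Rsub] unfolding cent_def by auto
      then show "conjset G g R \<subseteq> R" by simp
    qed
    then show False using nn by blast
  qed
  have XP: "Cyc \<subseteq> P" if P: "syl G p P" for P
  proof -
    have sP: "subgroup P G" using P unfolding syl_def by blast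
    define m where "m = multiplicity p (order G)"
    have cP: "card P = p ^ m" using P unfolding syl_def m_def by blast
    have sPX: "subgroup (P <#> Cyc) G" and PPX: "P \<subseteq> P <#> Cyc" and CPX: "Cyc \<subseteq> P <#> Cyc"
      and cPX: "card (P <#> Cyc) dvd p ^ m * p ^ k" using AX[OF sP] cP by auto
    obtain i where i: "card (P <#> Cyc) = p ^ i" using cPX p
      by (auto simp: divides_primepow_nat simp flip: power_add)
    have "p ^ i dvd order G" using card_subgroup_dvd_order[OF sPX] i by simp
    then have im: "i \<le> m" unfolding m_def
      using power_dvd_iff_le_multiplicity[of "order G" p i] opos prime_gt_1_nat[OF p] by simp
    have finPX: "finite (P <#> Cyc)" using fin subgroup.subset[OF sPX] finite_subset by blast
    have "card P \<le> card (P <#> Cyc)" using card_mono[OF finPX PPX] .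
    moreover have "card (P <#> Cyc) \<le> card P" using i cP im prime_gt_1_nat[OF p]
      by (simp add: power_increasing)
    ultimately have "P = P <#> Cyc" using card_subset_eq[OF finPX PPX] by simp
    then show ?thesis using CPX by simp
  qed
  have allcent: "\<exists>R. subgroup R G \<and> card R = r ^ multiplicity r (order G) \<and> cent G R = carrier G"
    if r: "Factorial_Ring.prime r" "r dvd order G" for r
  proof (cases "r = p")
    case False
    obtain R where R: "syl G r R" using syl_exists[OF fin r(1)] by blast
    have sR: "subgroup R G" using R unfolding syl_def by blast
    have Rsub: "R \<subseteq> carrier G" using subgroup.subset[OF sR] .
    define b where "b = multiplicity r (order G)"
    have cR: "card R = r ^ b" using R unfolding syl_def b_def by blast
    have Rn: "\<forall>g\<in>carrier G. conjset G g R \<subseteq> R" using N1[OF r False R] .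
    have "cent G R = carrier G"
    proof (rule cent_fill[OF Rsub])
      fix s :: nat assume s: "Factorial_Ring.prime s" "s dvd order G"
      obtain S where S: "syl G s S" using syl_exists[OF fin s(1)] by blast
      have sS: "subgroup S G" using S unfolding syl_def by blast
      define a where "a = multiplicity s (order G)"
      have cS: "card S = s ^ a" using S unfolding syl_def a_def by blast
      show "\<exists>S. subgroup S G \<and> card S = s ^ multiplicity s (order G) \<and> (\<forall>a\<in>R. \<forall>b\<in>S. a \<otimes> b = b \<otimes> a)"
      proof (cases "s = r")
        case True
        have "abel G (R <#> Cyc)" using star2[of "R <#> Cyc" r b p k] AX[OF sR] cR r p by simp
        then have "abel G R" using AX[OF sR] abel_mono by blast
        then show ?thesis using sR cR True unfolding abel_def b_def by blast
      next
        case sr: False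
        show ?thesis
        proof (cases "s = p")
          case False
          have Sn: "\<forall>g\<in>carrier G. conjset G g S \<subseteq> S" using N1[OF s False S] .
          obtain RX where RX: "RX = R <#> Cyc" by blast
          have sRX: "subgroup RX G" and xRX: "x \<in> RX" and RRX: "R \<subseteq> RX"
            and cRX: "card RX dvd r ^ b * p ^ k"
            using AX[OF sR] RX cR by auto
          have sH: "subgroup (S <#> RX) G"
            by (rule setmult_subgroup[OF sS sRX]) (use Sn subgroup.mem_carrier[OF sRX] in blast)
          have xH: "x \<in> S <#> RX" using setmult_sup2[OF sS sRX] xRX by blast
          have cH: "card (S <#> RX) dvd s ^ a * r ^ b * p ^ k"
            using prod_card_dvd[OF fin sS sRX] cRX cS
            by (metis dvd_trans mult.assoc mult_dvd_mono dvd_refl)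
          have abH: "abel G (S <#> RX)" using star3[OF sH xH cH s(1) r(1) p] .
          have "R \<subseteq> S <#> RX" "S \<subseteq> S <#> RX"
            using RRX setmult_sup2[OF sS sRX] setmult_sup1[OF sS sRX] by auto
          then have "\<forall>a\<in>R. \<forall>b\<in>S. a \<otimes> b = b \<otimes> a" using abH unfolding abel_def by blast
          then show ?thesis using sS cS unfolding a_def by auto
        next
          case True
          have CS: "Cyc \<subseteq> S" using XP S True by simp
          have sH: "subgroup (R <#> S) G"
            by (rule setmult_subgroup[OF sR sS]) (use Rn subgroup.mem_carrier[OF sS] in blast)
          have xH: "x \<in> R <#> S" using setmult_sup2[OF sR sS] CS Cyc(2) by blast
          have cH: "card (R <#> S) dvd r ^ b * s ^ a" using prod_card_dvd[OF fin sR sS] cR cS by simp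
          have abH: "abel G (R <#> S)" using star2[OF sH xH cH r(1) s(1)] .
          have "R \<subseteq> R <#> S" "S \<subseteq> R <#> S"
            using setmult_sup2[OF sR sS] setmult_sup1[OF sR sS] by auto
          then have "\<forall>a\<in>R. \<forall>b\<in>S. a \<otimes> b = b \<otimes> a" using abH unfolding abel_def by blast
          then show ?thesis using sS cS unfolding a_def by auto
        qed
      qed
    qed
    then show ?thesis using sR cR unfolding b_def by blast
  next
    case True
    obtain P where P: "syl G p P" using syl_exists[OF fin p] by blast
    have sP: "subgroup P G" using P unfolding syl_def by blast
    have Psub: "P \<subseteq> carrier G" using subgroup.subset[OF sP] .
    define m where "m = multiplicity p (order G)"
    have cP: "card P = p ^ m" using P unfolding syl_def m_def by blast
    have CP: "Cyc \<subseteq> P" using XP[OF P] .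
    have "cent G P = carrier G"
    proof (rule cent_fill[OF Psub])
      fix s :: nat assume s: "Factorial_Ring.prime s" "s dvd order G"
      obtain S where S: "syl G s S" using syl_exists[OF fin s(1)] by blast
      have sS: "subgroup S G" using S unfolding syl_def by blast
      define a where "a = multiplicity s (order G)"
      have cS: "card S = s ^ a" using S unfolding syl_def a_def by blast
      show "\<exists>S. subgroup S G \<and> card S = s ^ multiplicity s (order G) \<and> (\<forall>a\<in>P. \<forall>b\<in>S. a \<otimes> b = b \<otimes> a)"
      proof (cases "s = p")
        case True
        have "abel G P" using star2[of P p m p 0] sP CP Cyc(2) cP p by auto
        then show ?thesis using sP cP True unfolding abel_def m_def by blast
      next
        case False
        have Sn: "\<forall>g\<in>carrier G. conjset G g S \<subseteq> S" using N1[OF s False S] .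
        have sH: "subgroup (S <#> P) G"
          by (rule setmult_subgroup[OF sS sP]) (use Sn subgroup.mem_carrier[OF sP] in blast)
        have xH: "x \<in> S <#> P" using setmult_sup2[OF sS sP] CP Cyc(2) by blast
        have cH: "card (S <#> P) dvd s ^ a * p ^ m" using prod_card_dvd[OF fin sS sP] cS cP by simp
        have abH: "abel G (S <#> P)" using star2[OF sH xH cH s(1) p] .
        have "P \<subseteq> S <#> P" "S \<subseteq> S <#> P"
          using setmult_sup2[OF sS sP] setmult_sup1[OF sS sP] by auto
        then have "\<forall>a\<in>P. \<forall>b\<in>S. a \<otimes> b = b \<otimes> a" using abH unfolding abel_def by blast
        then show ?thesis using sS cS unfolding a_def by auto
      qed
    qed
    then show ?thesis using sP cP True unfolding m_def by blast
  qed
  have "cent G (carrier G) = carrier G"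
  proof (rule cent_fill[OF subset_refl])
    fix s :: nat assume s: "Factorial_Ring.prime s" "s dvd order G"
    obtain R where R: "subgroup R G" "card R = s ^ multiplicity s (order G)" "cent G R = carrier G"
      using allcent[OF s] by blast
    have "\<forall>a\<in>carrier G. \<forall>b\<in>R. a \<otimes> b = b \<otimes> a"
      using R(3) unfolding cent_def by blast
    then show "\<exists>S. subgroup S G \<and> card S = s ^ multiplicity s (order G) \<and> (\<forall>a\<in>carrier G. \<forall>b\<in>S. a \<otimes> b = b \<otimes> a)"
      using R by blast
  qed
  then have "abel G (carrier G)" unfolding abel_def cent_def by blast
  then show False using nonab by blast
qed

end



context crit
begin

lemma case2:
  assumes g0: "g0 \<in> carrier G" "g0 \<otimes> x \<noteq> x \<otimes> g0"
  shows False
proof -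
  have xsub: "{x} \<subseteq> carrier G" using xc by simp
  define Cx where "Cx = cent G {x}"
  have sCx: "subgroup Cx G" unfolding Cx_def using cent_subgroup[OF xsub] .
  have xCx: "x \<in> Cx" unfolding Cx_def cent_def using xc by simp
  have Cxne: "Cx \<noteq> carrier G" using g0 unfolding Cx_def cent_def by auto
  obtain P0 where P0: "syl G p P0" using syl_exists[OF fin p] by blast
  define m where "m = multiplicity p (order G)"
  obtain g where g: "g \<in> carrier G" "Cyc \<subseteq> conjset G g P0"
    using sylow_conj_contains[OF fin p P0 Cyc(1) Cyc(3)] by blast
  define P where "P = conjset G g P0"
  have sP0: "subgroup P0 G" using P0 unfolding syl_def by blast
  have sP: "subgroup P G" unfolding P_def using conjset_subgroup[OF sP0 g(1)] .
  have Psub: "P \<subseteq> carrier G" using subgroup.subset[OF sP] .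
  have cP: "card P = p ^ m" unfolding P_def m_def
    using card_conjset[OF g(1) subgroup.subset[OF sP0]] P0 unfolding syl_def by simp
  have P: "syl G p P" using sP cP unfolding syl_def m_def by simp
  have xP: "x \<in> P" using g Cyc(2) unfolding P_def by blast
  have abP: "abel G P" using star2[of P p m p 0] sP xP cP p by simp
  have PCx: "P \<subseteq> Cx" unfolding Cx_def cent_def using abP xP Psub unfolding abel_def by blast
  have "Cx = carrier G" unfolding Cx_def
  proof (rule cent_fill[OF xsub])
    fix s :: nat assume s: "Factorial_Ring.prime s" "s dvd order G"
    show "\<exists>S. subgroup S G \<and> card S = s ^ multiplicity s (order G) \<and> (\<forall>a\<in>{x}. \<forall>b\<in>S. a \<otimes> b = b \<otimes> a)"
    proof (cases "s = p")
      case True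
      have "\<forall>a\<in>{x}. \<forall>b\<in>P. a \<otimes> b = b \<otimes> a" using PCx unfolding Cx_def cent_def by auto
      then show ?thesis using sP cP True unfolding m_def by blast
    next
      case sp: False
      show ?thesis
      proof (cases "nrm G P = carrier G")
        case True
        obtain S where S: "syl G s S" using syl_exists[OF fin s(1)] by blast
        have sS: "subgroup S G" using S unfolding syl_def by blast
        define a where "a = multiplicity s (order G)"
        have cS: "card S = s ^ a" using S unfolding syl_def a_def by blast
        have sH: "subgroup (P <#> S) G"
        proof (rule setmult_subgroup[OF sP sS])
          fix c assume "c \<in> S"
          then have "c \<in> nrm G P" using True subgroup.mem_carrier[OF sS] by simp
          then show "conjset G c P \<subseteq> P" unfolding nrm_def by simp
        qed
        have xH: "x \<in> P <#> S" using setmult_sup1[OF sP sS] xP by blast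
        have cH: "card (P <#> S) dvd p ^ m * s ^ a" using prod_card_dvd[OF fin sP sS] cP cS by simp
        have abH: "abel G (P <#> S)" using star2[OF sH xH cH p s(1)] .
        have "S \<subseteq> P <#> S" using setmult_sup2[OF sP sS] .
        then have "\<forall>a\<in>{x}. \<forall>b\<in>S. a \<otimes> b = b \<otimes> a" using abH xH unfolding abel_def by blast
        then show ?thesis using sS cS unfolding a_def by blast
      next
        case False
        have PN: "P \<subseteq> nrm G P" using subgroup_sub_nrm[OF fin sP] .
        have abN: "abel G (nrm G P)" using star[OF nrm_subgroup[OF fin Psub] _ False] PN xP by blast
        obtain K where nK: "K \<lhd> G" and cK: "card K * card P = order G"
          using burnside_complement[OF fin p P abN] by blast
        have sK: "subgroup K G" using normal.axioms(1)[OF nK] .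
        have Ksub: "K \<subseteq> carrier G" using subgroup.subset[OF sK] .
        have Kpos: "card K > 0" using card_subgroup_pos[OF fin sK] .
        have eG: "order G = card K * p ^ m" using cK cP by simp
        obtain Q where Q: "subgroup Q G" "Q \<subseteq> K" "card Q = s ^ multiplicity s (card K)"
          using sylow_in_subgroup[OF fin sK s(1)] by blast
        have Qsub: "Q \<subseteq> carrier G" using subgroup.subset[OF Q(1)] .
        have ms: "multiplicity s (card K) = multiplicity s (order G)"
          using mult_other[OF s(1) p sp eG Kpos] .
        define N where "N = nrm G Q"
        have sN: "subgroup N G" unfolding N_def using nrm_subgroup[OF fin Qsub] .
        interpret GK: group "G\<lparr>carrier := K\<rparr>" using subgroup_imp_group[OF sK] .
        have finK: "finite (carrier (G\<lparr>carrier := K\<rparr>))" using fin Ksub finite_subset by auto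
        have ordK: "order (G\<lparr>carrier := K\<rparr>) = card K" by (simp add: order_def)
        have sylQ: "syl (G\<lparr>carrier := K\<rparr>) s Q"
          unfolding syl_def ordK using subgroup_incl[OF Q(1) sK Q(2)] Q(3) by simp
        have KN: "K <#> N = carrier G"
        proof
          show "K <#> N \<subseteq> carrier G" using set_mult_closed[OF Ksub subgroup.subset[OF sN]] .
          show "carrier G \<subseteq> K <#> N"
          proof
            fix y assume y: "y \<in> carrier G"
            define T where "T = conjset G y Q"
            have sT: "subgroup T G" unfolding T_def using conjset_subgroup[OF Q(1) y] .
            have TK: "T \<subseteq> K" unfolding T_def using conjset_mono[OF Q(2), of y] normal_conj[OF nK y] by blast
            have cT: "card T = card Q" unfolding T_def using card_conjset[OF y Qsub] .
            have sylT: "syl (G\<lparr>carrier := K\<rparr>) s T"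
              unfolding syl_def ordK using subgroup_incl[OF sT sK TK] cT Q(3) by simp
            obtain c where c: "c \<in> K" "T = conjset (G\<lparr>carrier := K\<rparr>) c Q"
              using GK.sylow_conj[OF finK s(1) sylQ sylT] by auto
            have cc: "c \<in> carrier G" using c Ksub by blast
            have eqc: "conjset G y Q = conjset G c Q" using c conjset_consistent[OF sK c(1)] unfolding T_def by simp
            define nn where "nn = inv c \<otimes> y"
            have nnc: "nn \<in> carrier G" unfolding nn_def using cc y by simp
            have "conjset G nn Q = Q" unfolding nn_def
              using conjset_mult[OF inv_closed[OF cc] y Qsub] eqc conjset_inv_cancel[OF cc Qsub] by simp
            then have nnN: "nn \<in> N" unfolding N_def nrm_def using nnc by simp
            have "y = c \<otimes> nn" unfolding nn_def using cc y by simp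
            then show "y \<in> K <#> N" unfolding set_mult_def using c(1) nnN by blast
          qed
        qed
        have pf: "card (K <#> N) * card (K \<inter> N) = card K * card N" using prod_formula[OF fin sK sN] .
        then have "card K * (p ^ m * card (K \<inter> N)) = card K * card N" using KN eG
          by (simp add: order_def mult.assoc)
        then have "p ^ m * card (K \<inter> N) = card N" using Kpos by simp
        then have dN: "p ^ m dvd card N" by (metis dvd_triv_left)
        obtain P' where P': "subgroup P' G" "P' \<subseteq> N" "card P' = p ^ multiplicity p (card N)"
          using sylow_in_subgroup[OF fin sN p] by blast
        have Npos: "card N \<noteq> 0" using card_subgroup_pos[OF fin sN] by simp
        have "multiplicity p (card N) = m"
        proof (rule antisym)
          show "multiplicity p (card N) \<le> m" unfolding m_def
            using dvd_imp_multiplicity_le[of "card N" "order G" p] card_subgroup_dvd_order[OF sN] opos by simp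
          show "m \<le> multiplicity p (card N)"
            using dN power_dvd_iff_le_multiplicity[of "card N" p m] Npos prime_gt_1_nat[OF p] by simp
        qed
        then have sylP': "syl G p P'" using P' unfolding syl_def m_def by simp
        obtain h where h: "h \<in> carrier G" "P' = conjset G h P"
          using sylow_conj[OF fin p P sylP'] by blast
        define y where "y = h \<otimes> x \<otimes> inv h"
        have yc: "y \<in> carrier G" unfolding y_def using h xc by simp
        have yN: "y \<in> N" using conjset_mem[OF xP, of h] h P'(2) unfolding y_def by blast
        have yQ: "conjset G y Q = Q" using yN unfolding N_def nrm_def by simp
        define Q' where "Q' = conjset G (inv h) Q"
        have sQ': "subgroup Q' G" unfolding Q'_def using conjset_subgroup[OF Q(1) inv_closed[OF h(1)]] .
        have Q'sub: "Q' \<subseteq> carrier G" using subgroup.subset[OF sQ'] .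
        have cQ': "card Q' = s ^ multiplicity s (order G)" unfolding Q'_def
          using card_conjset[OF inv_closed[OF h(1)] Qsub] Q(3) ms by simp
        have xhy: "x \<otimes> inv h = inv h \<otimes> y" unfolding y_def using h xc by (simp add: m_assoc)
        have "conjset G x Q' = conjset G (x \<otimes> inv h) Q" unfolding Q'_def
          using conjset_mult[OF xc inv_closed[OF h(1)] Qsub] by simp
        also have "\<dots> = conjset G (inv h) (conjset G y Q)" unfolding xhy
          using conjset_mult[OF inv_closed[OF h(1)] yc Qsub] by simp
        also have "\<dots> = Q'" unfolding Q'_def using yQ by simp
        finally have xN': "x \<in> nrm G Q'" unfolding nrm_def using xc by simp
        have CycN: "Cyc \<subseteq> nrm G Q'" using cyc_in_subgroup[OF nrm_subgroup[OF fin Q'sub] xN'] .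
        have sH: "subgroup (Q' <#> Cyc) G"
        proof (rule setmult_subgroup[OF sQ' Cyc(1)])
          fix c assume "c \<in> Cyc"
          then show "conjset G c Q' \<subseteq> Q'" using CycN unfolding nrm_def by auto
        qed
        have xH: "x \<in> Q' <#> Cyc" using setmult_sup2[OF sQ' Cyc(1)] Cyc(2) by blast
        have cH: "card (Q' <#> Cyc) dvd s ^ multiplicity s (order G) * p ^ k"
          using prod_card_dvd[OF fin sQ' Cyc(1)] cQ' Cyc(3) by simp
        have abH: "abel G (Q' <#> Cyc)" using star2[OF sH xH cH s(1) p] .
        have "Q' \<subseteq> Q' <#> Cyc" using setmult_sup1[OF sQ' Cyc(1)] .
        then have "\<forall>a\<in>{x}. \<forall>b\<in>Q'. a \<otimes> b = b \<otimes> a" using abH xH unfolding abel_def by blast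
        then show ?thesis using sQ' cQ' by blast
      qed
    qed
  qed
  then show False using Cxne by simp
qed

lemma crit_false: False
proof (cases "\<forall>g\<in>carrier G. g \<otimes> x = x \<otimes> g")
  case True then show False using case1 by blast
next
  case False then show False using case2 by blast
qed

end



context group
begin

lemma exists_crit_elem:
  assumes fin: "finite (carrier G)" and crit: "exponent_critical G"
  shows "\<exists>x q a. x \<in> carrier G \<and> Factorial_Ring.prime (q::nat) \<and> ord x = q ^ a \<and>
           (\<forall>H. subgroup H G \<longrightarrow> x \<in> H \<longrightarrow> H \<noteq> carrier G \<longrightarrow> abel G H)"
proof -
  define e where "e = Lcm (ord ` carrier G)"
  define L where "L = Lcm {set_exponent G H | H. subgroup H G \<and> H \<noteq> carrier G \<and> nonabelian_set G H}"
  have ordpos: "ord g \<noteq> 0" if "g \<in> carrier G" for g using ord_ge_1[OF fin that] by simp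
  have "0 \<notin> ord ` carrier G" using ordpos by force
  then have e0: "e \<noteq> 0" unfolding e_def using Lcm_0_iff_nat[of "ord ` carrier G"] fin by simp
  have Ld: "L dvd e" unfolding L_def
  proof (rule Lcm_least)
    fix b assume "b \<in> {set_exponent G H | H. subgroup H G \<and> H \<noteq> carrier G \<and> nonabelian_set G H}"
    then obtain H where H: "b = set_exponent G H" "subgroup H G" by blast
    show "b dvd e" unfolding H(1) set_exponent_def e_def
      by (rule Lcm_subset) (use subgroup.subset[OF H(2)] in auto)
  qed
  have Lne: "L \<noteq> e" using crit unfolding exponent_critical_def group_exponent_def set_exponent_def L_def e_def
    by simp
  have L0: "L \<noteq> 0" using Ld e0 by auto
  obtain q where q: "Factorial_Ring.prime q" and nq: "\<not> q ^ multiplicity q e dvd L"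
  proof -
    have "\<exists>q. Factorial_Ring.prime q \<and> \<not> q ^ multiplicity q e dvd L"
    proof (rule ccontr)
      assume "\<not> ?thesis"
      then have all: "q ^ multiplicity q e dvd L" if "Factorial_Ring.prime q" for q using that by blast
      have "e dvd L"
      proof (rule multiplicity_le_imp_dvd[OF e0])
        fix t :: nat assume t: "Factorial_Ring.prime t"
        show "multiplicity t e \<le> multiplicity t L"
          using all[OF t] power_dvd_iff_le_multiplicity[of L t "multiplicity t e"] L0 prime_gt_1_nat[OF t]
          by simp
      qed
      then show False using Ld Lne dvd_antisym by blast
    qed
    then show ?thesis using that by blast
  qed
  define a where "a = multiplicity q e"
  have q1: "q \<noteq> Suc 0" and q0: "q \<noteq> 0" using prime_gt_1_nat[OF q] by auto
  have apos: "a > 0"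
  proof (rule ccontr)
    assume "\<not> a > 0" then have "a = 0" by simp
    then show False using nq unfolding a_def by simp
  qed
  obtain g where gc: "g \<in> carrier G" and gd: "q ^ a dvd ord g"
  proof -
    have "\<exists>g\<in>carrier G. q ^ a dvd ord g"
    proof (rule ccontr)
      assume nex: "\<not> ?thesis"
      have qe: "q dvd e" using apos multiplicity_eq_zero_iff[of e q] e0 q1 unfolding a_def by simp
      define e' where "e' = e div q"
      have ee: "e = q * e'" unfolding e'_def using qe by simp
      have e'0: "e' \<noteq> 0" using ee e0 by auto
      have me: "multiplicity t e = multiplicity t q + multiplicity t e'" if "Factorial_Ring.prime t" for t
        using prime_elem_multiplicity_mult_distrib[of t q e'] that q0 e'0 ee by simp
      have "ord h dvd e'" if h: "h \<in> carrier G" for h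
      proof (rule multiplicity_le_imp_dvd[OF ordpos[OF h]])
        fix t :: nat assume t: "Factorial_Ring.prime t"
        have "ord h dvd e" unfolding e_def using h by (simp add: dvd_Lcm)
        then have le: "multiplicity t (ord h) \<le> multiplicity t e"
          using dvd_imp_multiplicity_le e0 by blast
        show "multiplicity t (ord h) \<le> multiplicity t e'"
        proof (cases "t = q")
          case True
          have "\<not> a \<le> multiplicity q (ord h)"
            using power_dvd_iff_le_multiplicity[of "ord h" q a] ordpos[OF h] q1 nex h by auto
          moreover have "multiplicity q q = 1" using multiplicity_prime q by (simp add: prime_imp_prime_elem)
          ultimately show ?thesis using me[OF q] True unfolding a_def by simp
        next
          case False
          have "multiplicity t q = 0" using prime_multiplicity_other[OF t q False] .
          then show ?thesis using le me[OF t] by simp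
        qed
      qed
      then have "e dvd e'" unfolding e_def by (auto intro: Lcm_least)
      then have "e \<le> e'" using e'0 by (simp add: dvd_imp_le)
      moreover have "e' < e" using ee e'0 prime_gt_1_nat[OF q] by simp
      ultimately show False by simp
    qed
    then show ?thesis using that by blast
  qed
  obtain t where t: "ord g = q ^ a * t" using gd by blast
  have t0: "t \<noteq> 0" using t ordpos[OF gc] by auto
  define x where "x = g [^] t"
  have xc: "x \<in> carrier G" unfolding x_def using gc by simp
  have ox: "ord x = q ^ a" unfolding x_def
    using ord_pow[OF gc, of t] t t0 by simp
  have star: "abel G H" if H: "subgroup H G" "x \<in> H" "H \<noteq> carrier G" for H
  proof (rule ccontr)
    assume na: "\<not> abel G H"
    then have "nonabelian_set G H" unfolding abel_def nonabelian_set_def by blast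
    then have "set_exponent G H dvd L" unfolding L_def using H by (auto intro: dvd_Lcm)
    moreover have "ord x dvd set_exponent G H" unfolding set_exponent_def using H(2) by (simp add: dvd_Lcm)
    ultimately have "q ^ a dvd L" using ox by (metis dvd_trans)
    then show False using nq unfolding a_def by simp
  qed
  show ?thesis using xc q ox star by blast
qed

end

theorem theoremA:
  fixes G :: "('a, 'b) monoid_scheme"
  assumes "group G" and "finite (carrier G)"
    and "nonabelian_set G (carrier G)"
    and "exponent_critical G"
  shows "card (prime_factors (order G)) \<le> 3"
proof (rule ccontr)
  assume "\<not> card (prime_factors (order G)) \<le> 3"
  then have four: "4 \<le> card (prime_factors (order G))" by simp
  interpret group G by fact
  obtain x q a where x: "x \<in> carrier G" "Factorial_Ring.prime (q::nat)" "ord x = q ^ a"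
    and star: "\<And>H. subgroup H G \<Longrightarrow> x \<in> H \<Longrightarrow> H \<noteq> carrier G \<Longrightarrow> abel G H"
    using exists_crit_elem[OF assms(2,4)] by blast
  have nonab: "\<not> abel G (carrier G)" using assms(3) unfolding abel_def nonabelian_set_def by blast
  interpret crit G x q a
    by (rule crit.intro[OF is_group crit_axioms.intro]) (use assms(2) nonab x star four in auto)
  show False using crit_false .
qed


end
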